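(* Let $M(\mathbb{R}^n)$ denote the set of Gaussian mixture distributions on $\mathbb{R}^n$, and let $d$ be the function on $M(\mathbb{R}^n)\times M(\mathbb{R}^n)$ defined in the context below. Then $d$ is a metric on $M(\mathbb{R}^n)$: for all $\mu_0,\mu_1,\mu_2\in M(\mathbb{R}^n)$ we have $d(\mu_0,\mu_1)\ge 0$, $d(\mu_0,\mu_1)=0$ if and only if $\mu_0=\mu_1$, $d(\mu_0,\mu_1)=d(\mu_1,\mu_0)$, and $d(\mu_0,\mu_2)\le d(\mu_0,\mu_1)+d(\mu_1,\mu_2)$.
   Context: A Gaussian distribution on $\mathbb{R}^n$ is the normal law $N(m,\Sigma)$ with mean $m\in\mathbb{R}^n$ and symmetric positive definite covariance $\Sigma$. For two Gaussians $\nu_0=N(m_0,\Sigma_0)$, $\nu_1=N(m_1,\Sigma_1)$, $W_2(\nu_0,\nu_1)$ denotes their 2-Wasserstein distance (quadratic-cost optimal transport distance), which equals $W_2(\nu_0,\nu_1)^2=\|m_0-m_1\|^2+\operatorname{trace}\big(\Sigma_0+\Sigma_1-2(\Sigma_0^{1/2}\Sigma_1\Sigma_0^{1/2})^{1/2}\big)$. A Gaussian mixture distribution is a probability distribution of the form $\mu=\sum_{k=1}^N p^k\nu^k$ with $N$ finite, each $\nu^k$ a Gaussian distribution on $\mathbb{R}^n$, and $p=(p^1,\dots,p^N)$ a probability vector; $M(\mathbb{R}^n)$ is the set of these. Given $\mu_0=\sum_{i=1}^{N_0}p_0^i\nu_0^i$ and $\mu_1=\sum_{j=1}^{N_1}p_1^j\nu_1^j$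 in $M(\mathbb{R}^n)$, let $\Pi(p_0,p_1)$ be the set of nonnegative $N_0\times N_1$ matrices $\pi$ with $\sum_j\pi(i,j)=p_0^i$ and $\sum_i\pi(i,j)=p_1^j$, set $c(i,j)=W_2(\nu_0^i,\nu_1^j)^2$, let $\pi^*$ be a minimizer of $\sum_{i,j}c(i,j)\pi(i,j)$ over $\pi\in\Pi(p_0,p_1)$, and define $d(\mu_0,\mu_1)=\sqrt{\sum_{i,j}c(i,j)\pi^*(i,j)}$. *)

theory Defs
  imports "HOL-Analysis.Analysis" "HOL-Probability.Probability"
begin

definition spd :: "real^'n^'n \<Rightarrow> bool" where
  "spd S \<longleftrightarrow> transpose S = S \<and> (\<forall>x. x \<noteq> 0 \<longrightarrow> x \<bullet> (S *v x) > 0)"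

definition psd :: "real^'n^'n \<Rightarrow> bool" where
  "psd S \<longleftrightarrow> transpose S = S \<and> (\<forall>x. x \<bullet> (S *v x) \<ge> 0)"

definition msqrt :: "real^'n^'n \<Rightarrow> real^'n^'n" where
  "msqrt A = (THE B. psd B \<and> B ** B = A)"

definition gauss_pdf :: "real^'n \<Rightarrow> real^'n^'n \<Rightarrow> real^'n \<Rightarrow> real" where
  "gauss_pdf m S x =
     (2 * pi) powr (- real CARD('n) / 2) * det S powr (-1/2)
     * exp (- ((x - m) \<bullet> (matrix_inv S *v (x - m))) / 2)"

definition gaussian :: "real^'n \<Rightarrow> real^'n^'n \<Rightarrow> (real^'n) measure" where
  "gaussian m S = density lborel (\<lambda>x. ennreal (gauss_pdf m S x))"

text \<open>Squared 2-Wasserstein distance between N(m0,S0) and N(m1,S1), closed form.\<close>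

definition W2sq :: "real^'n \<Rightarrow> real^'n^'n \<Rightarrow> real^'n \<Rightarrow> real^'n^'n \<Rightarrow> real" where
  "W2sq m0 S0 m1 S1 =
     (norm (m0 - m1))\<^sup>2
     + trace (S0 + S1 - 2 *\<^sub>R msqrt (msqrt S0 ** S1 ** msqrt S0))"

text \<open>A Gaussian mixture is represented by a finite list of components
  (weight p^k, mean m^k, covariance S^k).\<close>

type_synonym 'n gmm = "(real \<times> (real^'n) \<times> (real^'n^'n)) list"

definition wt :: "('n::finite) gmm \<Rightarrow> nat \<Rightarrow> real" where "wt r k = fst (r ! k)"
definition mean :: "('n::finite) gmm \<Rightarrow> nat \<Rightarrow> real^'n" where "mean r k = fst (snd (r ! k))"
definition cov :: "('n::finite) gmm \<Rightarrow> nat \<Rightarrow> real^'n^'n" where "cov r k = snd (snd (r ! k))"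

definition valid_gmm :: "('n::finite) gmm \<Rightarrow> bool" where
  "valid_gmm r \<longleftrightarrow> (\<forall>k < length r. wt r k \<ge> 0 \<and> spd (cov r k))
                    \<and> (\<Sum>k < length r. wt r k) = 1"

definition gmm_measure :: "('n::finite) gmm \<Rightarrow> (real^'n) measure" where
  "gmm_measure r = density lborel
     (\<lambda>x. ennreal (\<Sum>k < length r. wt r k * gauss_pdf (mean r k) (cov r k) x))"

definition GMM :: "(real^'n) measure set" where
  "GMM = {gmm_measure r | r. valid_gmm r}"

definition couplings :: "('n::finite) gmm \<Rightarrow> ('n::finite) gmm \<Rightarrow> (nat \<Rightarrow> nat \<Rightarrow> real) set" where
  "couplings r0 r1 = {\<pi>.
     (\<forall>i < length r0. \<forall>j < length r1. \<pi> i j \<ge> 0)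
     \<and> (\<forall>i < length r0. (\<Sum>j < length r1. \<pi> i j) = wt r0 i)
     \<and> (\<forall>j < length r1. (\<Sum>i < length r0. \<pi> i j) = wt r1 j)}"

definition gmm_cost :: "('n::finite) gmm \<Rightarrow> ('n::finite) gmm \<Rightarrow> (nat \<Rightarrow> nat \<Rightarrow> real) \<Rightarrow> real" where
  "gmm_cost r0 r1 \<pi> = (\<Sum>i < length r0. \<Sum>j < length r1.
      W2sq (mean r0 i) (cov r0 i) (mean r1 j) (cov r1 j) * \<pi> i j)"

text \<open>d(mu0,mu1) = sqrt of the optimal value of the discrete transport problem
  (the infimum is attained, so this is the cost of a minimizer pi*).\<close>

definition gmm_dist :: "('n::finite) gmm \<Rightarrow> ('n::finite) gmm \<Rightarrow> real" where
  "gmm_dist r0 r1 = sqrt (Inf (gmm_cost r0 r1 ` couplings r0 r1))"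

end

theory Submission
  imports Defs "HOL-Real_Asymp.Real_Asymp"
begin

lemma sym_inner:
  fixes A :: "real^'n^'n"
  assumes "transpose A = A"
  shows "x \<bullet> (A *v y) = y \<bullet> (A *v x)"
proof -
  have "x \<bullet> (A *v y) = (x v* A) \<bullet> y" by (simp add: dot_lmul_matrix)
  also have "x v* A = transpose A *v x" by (simp add: transpose_matrix_vector)
  also have "\<dots> = A *v x" using assms by simp
  finally show ?thesis by (simp add: inner_commute)
qed

lemma quad_nonneg_lin_zero:
  fixes a b :: real
  assumes "\<And>t. 2 * t * a + t^2 * b \<ge> 0"
  shows "a = 0"
proof (rule ccontr)
  assume "a \<noteq> 0"
  define c where "c = \<bar>b\<bar> + 1"
  have c: "c > 0" unfolding c_def by simp
  have "2 * (-a/c) * a + (-a/c)^2 * b \<ge> 0" by (rule assms)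
  hence "a^2 * (b - 2*c) / c^2 \<ge> 0" using c by (simp add: field_simps power2_eq_square)
  hence "a^2 * (b - 2*c) \<ge> 0" using c by (simp add: zero_le_divide_iff)
  moreover have "a^2 > 0" using \<open>a \<noteq> 0\<close> by simp
  moreover have "b - 2*c < 0" unfolding c_def by (simp add: abs_if)
  ultimately show False by (simp add: mult_pos_neg zero_le_mult_iff)
qed

lemma eigvec_exists:
  fixes A :: "real^'n^'n"
  assumes sym: "transpose A = A" and S: "subspace S" and inv: "\<And>x. x \<in> S \<Longrightarrow> A *v x \<in> S"
    and ne: "S \<noteq> {0}"
  shows "\<exists>e\<in>S. norm e = 1 \<and> A *v e = (e \<bullet> (A *v e)) *\<^sub>R e"
proof -
  let ?K = "S \<inter> sphere 0 1"
  have K1: "compact ?K" using S by (simp add: closed_subspace closed_Int_compact)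
  have K2: "?K \<noteq> {}"
  proof -
    obtain y where "y \<in> S" "y \<noteq> 0" using ne S subspace_0 by blast
    hence "(1/norm y) *\<^sub>R y \<in> ?K" using S by (simp add: subspace_scale)
    thus ?thesis by blast
  qed
  have K3: "continuous_on ?K (\<lambda>x. x \<bullet> (A *v x))"
    by (intro continuous_on_inner continuous_on_id linear_continuous_on matrix_vector_mul_bounded_linear)
  obtain e where e: "e \<in> ?K" and emax: "\<And>y. y \<in> ?K \<Longrightarrow> y \<bullet> (A *v y) \<le> e \<bullet> (A *v e)"
    using continuous_attains_sup[OF K1 K2 K3] by blast
  define l where "l = e \<bullet> (A *v e)"
  have ne1: "norm e = 1" "e \<in> S" using e by auto
  have bound: "x \<bullet> (A *v x) \<le> l * (x \<bullet> x)" if "x \<in> S" for x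
  proof (cases "x = 0")
    case True thus ?thesis by simp
  next
    case False
    define y where "y = (1/norm x) *\<^sub>R x"
    have "y \<in> ?K" using that False S unfolding y_def by (simp add: subspace_scale)
    hence "y \<bullet> (A *v y) \<le> l" using emax l_def by blast
    hence "(1/norm x)^2 * (x \<bullet> (A *v x)) \<le> l" unfolding y_def
      by (simp add: matrix_vector_mult_scaleR power2_eq_square)
    hence "x \<bullet> (A *v x) \<le> l * (norm x)^2" using False
      by (simp add: field_simps power2_eq_square)
    thus ?thesis by (simp add: power2_norm_eq_inner)
  qed
  define g where "g x = l * (x \<bullet> x) - x \<bullet> (A *v x)" for x
  have g0: "g x \<ge> 0" if "x \<in> S" for x using bound[OF that] unfolding g_def by simp
  have ge: "g e = 0" unfolding g_def l_def using ne1
    by (simp add: power2_norm_eq_inner[symmetric])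
  have orth: "l * (y \<bullet> e) - y \<bullet> (A *v e) = 0" if "y \<in> S" for y
  proof (rule quad_nonneg_lin_zero[where b = "g y"])
    fix t :: real
    have "e + t *\<^sub>R y \<in> S" using S that ne1 by (simp add: subspace_add subspace_scale)
    hence "g (e + t *\<^sub>R y) \<ge> 0" by (rule g0)
    also have "g (e + t *\<^sub>R y) = g e + 2 * t * (l * (y \<bullet> e) - y \<bullet> (A *v e)) + t^2 * g y"
      using sym_inner[OF sym, of e y]
      unfolding g_def by (simp add: matrix_vector_right_distrib matrix_vector_mult_scaleR
          inner_add_left inner_add_right algebra_simps power2_eq_square inner_commute)
    finally show "2 * t * (l * (y \<bullet> e) - y \<bullet> (A *v e)) + t^2 * g y \<ge> 0" using ge by simp
  qed
  define y where "y = l *\<^sub>R e - A *v e"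
  have "y \<in> S" unfolding y_def using S ne1 inv by (simp add: subspace_diff subspace_scale)
  hence "l * (y \<bullet> e) - y \<bullet> (A *v e) = 0" by (rule orth)
  hence "y \<bullet> y = 0" unfolding y_def by (simp add: inner_diff_left inner_commute algebra_simps)
  hence "y = 0" by simp
  thus ?thesis using ne1 unfolding y_def l_def by (intro bexI[of _ e]) auto
qed


lemma eigbasis_sub:
  fixes A :: "real^'n^'n"
  assumes sym: "transpose A = A"
  shows "subspace S \<Longrightarrow> (\<forall>x\<in>S. A *v x \<in> S) \<Longrightarrow>
    \<exists>E. E \<subseteq> S \<and> finite E \<and> pairwise orthogonal E \<and>
        (\<forall>e\<in>E. norm e = 1 \<and> A *v e = (e \<bullet> (A *v e)) *\<^sub>R e) \<and> span E = S"
proof (induction "dim S" arbitrary: S rule: less_induct)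
  case less
  show ?case
  proof (cases "S = {0}")
    case True
    thus ?thesis by (intro exI[of _ "{}"]) auto
  next
    case False
    obtain e where e: "e \<in> S" "norm e = 1" "A *v e = (e \<bullet> (A *v e)) *\<^sub>R e"
      using eigvec_exists[OF sym less(2) _ False] less(3) by blast
    define l where "l = e \<bullet> (A *v e)"
    define S' where "S' = S \<inter> {x. e \<bullet> x = 0}"
    have sub': "subspace S'" unfolding S'_def
      using less(2) by (auto simp: subspace_def inner_add_right)
    have inv': "\<forall>x\<in>S'. A *v x \<in> S'"
    proof
      fix x assume x: "x \<in> S'"
      have "e \<bullet> (A *v x) = x \<bullet> (A *v e)" by (rule sym_inner[OF sym])
      also have "\<dots> = l * (x \<bullet> e)" by (subst e(3)) (simp add: l_def)
      also have "\<dots> = 0" using x unfolding S'_def by (simp add: inner_commute)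
      finally show "A *v x \<in> S'" using x less(3) unfolding S'_def by auto
    qed
    have "dim S' < dim S"
    proof (rule dim_psubset)
      have "S' \<subset> S"
      proof
        show "S' \<subseteq> S" unfolding S'_def by auto
        have "e \<bullet> e = 1" using e(2) by (simp add: norm_eq_1)
        thus "S' \<noteq> S" using e(1) unfolding S'_def by (metis (mono_tags) IntD2 mem_Collect_eq zero_neq_one)
      qed
      moreover have "span S' = S'" "span S = S" using sub' less(2) by (simp_all add: span_eq_iff)
      ultimately show "span S' \<subset> span S" by metis
    qed
    then obtain E' where E': "E' \<subseteq> S'" "finite E'" "pairwise orthogonal E'"
        "\<forall>e\<in>E'. norm e = 1 \<and> A *v e = (e \<bullet> (A *v e)) *\<^sub>R e" "span E' = S'"
      using less(1)[OF _ sub' inv'] by blast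
    show ?thesis
    proof (intro exI[of _ "insert e E'"] conjI)
      show "insert e E' \<subseteq> S" using E'(1) e(1) unfolding S'_def by auto
      show "finite (insert e E')" using E'(2) by simp
      show "pairwise orthogonal (insert e E')"
        using E'(1,3) unfolding pairwise_insert S'_def orthogonal_def by (auto simp: inner_commute)
      show "\<forall>x\<in>insert e E'. norm x = 1 \<and> A *v x = (x \<bullet> (A *v x)) *\<^sub>R x" using E'(4) e by auto
      show "span (insert e E') = S"
      proof
        show "span (insert e E') \<subseteq> S"
          using \<open>insert e E' \<subseteq> S\<close> less(2) by (simp add: span_minimal)
        show "S \<subseteq> span (insert e E')"
        proof
          fix x assume x: "x \<in> S"
          have ee: "e \<bullet> e = 1" using e(2) by (simp add: norm_eq_1)
          have "x - (e \<bullet> x) *\<^sub>R e \<in> S'" unfolding S'_def using x e(1) less(2) ee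
            by (auto simp: subspace_diff subspace_scale inner_diff_right)
          hence "x - (e \<bullet> x) *\<^sub>R e \<in> span (insert e E')" using E'(5) span_mono[of E' "insert e E'"] by auto
          moreover have "(e \<bullet> x) *\<^sub>R e \<in> span (insert e E')" by (simp add: span_base span_scale)
          ultimately have "(x - (e \<bullet> x) *\<^sub>R e) + (e \<bullet> x) *\<^sub>R e \<in> span (insert e E')" by (rule span_add)
          thus "x \<in> span (insert e E')" by simp
        qed
      qed
    qed
  qed
qed

lemma eigbasis:
  fixes A :: "real^'n^'n"
  assumes sym: "transpose A = A"
  shows "\<exists>E. finite E \<and> pairwise orthogonal E \<and>
        (\<forall>e\<in>E. norm e = 1 \<and> A *v e = (e \<bullet> (A *v e)) *\<^sub>R e) \<and> span E = UNIV"
  using eigbasis_sub[OF sym, of UNIV] by auto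

lemma sym_from_inner:
  fixes B :: "real^'n^'n"
  assumes "\<And>x y. x \<bullet> (B *v y) = y \<bullet> (B *v x)"
  shows "transpose B = B"
proof -
  have "transpose B *v x = B *v x" for x
  proof -
    define d where "d = x v* B - B *v x"
    have "d \<bullet> d = (x v* B) \<bullet> d - (B *v x) \<bullet> d" unfolding d_def by (simp add: inner_diff_left)
    also have "(x v* B) \<bullet> d = x \<bullet> (B *v d)" by (rule dot_lmul_matrix)
    also have "\<dots> = d \<bullet> (B *v x)" by (rule assms)
    finally have "d = 0" by (simp add: inner_commute)
    thus ?thesis unfolding d_def by (simp add: transpose_matrix_vector)
  qed
  thus ?thesis by (simp add: matrix_eq)
qed

lemma sym_inner2:
  fixes A :: "real^'n^'n"
  assumes "transpose A = A"
  shows "x \<bullet> (A *v y) = (A *v x) \<bullet> y"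
  using sym_inner[OF assms] by (simp add: inner_commute)

lemma psd_zero:
  fixes P :: "real^'n^'n"
  assumes "psd P" and "x \<bullet> (P *v x) = 0"
  shows "P *v x = 0"
proof -
  have sym: "transpose P = P" using assms(1) unfolding psd_def by simp
  have "y \<bullet> (P *v x) = 0" for y
  proof (rule quad_nonneg_lin_zero[where b = "y \<bullet> (P *v y)"])
    fix t :: real
    have "(x + t *\<^sub>R y) \<bullet> (P *v (x + t *\<^sub>R y)) \<ge> 0" using assms(1) unfolding psd_def by simp
    also have "(x + t *\<^sub>R y) \<bullet> (P *v (x + t *\<^sub>R y)) = x \<bullet> (P *v x) + 2 * t * (y \<bullet> (P *v x)) + t^2 * (y \<bullet> (P *v y))"
      using sym_inner[OF sym, of x y]
      by (simp add: matrix_vector_right_distrib matrix_vector_mult_scaleR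
          inner_add_left inner_add_right algebra_simps power2_eq_square)
    finally show "2 * t * (y \<bullet> (P *v x)) + t^2 * (y \<bullet> (P *v y)) \<ge> 0" using assms(2) by simp
  qed
  from this[of "P *v x"] show ?thesis by simp
qed

lemma psd_sqrt_exists:
  fixes A :: "real^'n^'n"
  assumes "psd A"
  shows "\<exists>B. psd B \<and> B ** B = A"
proof -
  have sym: "transpose A = A" using assms unfolding psd_def by simp
  obtain E where E: "finite E" "pairwise orthogonal E"
      "\<forall>e\<in>E. norm e = 1 \<and> A *v e = (e \<bullet> (A *v e)) *\<^sub>R e" "span E = UNIV"
    using eigbasis[OF sym] by blast
  define lam where "lam e = e \<bullet> (A *v e)" for e
  have lam0: "lam e \<ge> 0" for e using assms unfolding psd_def lam_def by simp
  define f where "f x = (\<Sum>e\<in>E. (sqrt (lam e) * (e \<bullet> x)) *\<^sub>R e)" for x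
  have lin: "linear f" unfolding f_def
    by (auto simp: linear_iff inner_add_right algebra_simps sum.distrib scaleR_sum_right)
  define B where "B = matrix f"
  have Bv: "B *v x = f x" for x unfolding B_def using matrix_vector_mul(2)[OF lin] by metis
  have orth: "e \<bullet> e' = (if e = e' then 1 else 0)" if "e \<in> E" "e' \<in> E" for e e'
    using E(2,3) that unfolding pairwise_def orthogonal_def by (auto simp: norm_eq_1)
  have Be: "B *v e' = sqrt (lam e') *\<^sub>R e'" if "e' \<in> E" for e'
  proof -
    have "B *v e' = (\<Sum>e\<in>E. (if e = e' then sqrt (lam e) *\<^sub>R e else 0))"
      unfolding Bv f_def by (rule sum.cong) (auto simp: orth that)
    also have "\<dots> = sqrt (lam e') *\<^sub>R e'" using E(1) that by (simp add: sum.delta')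
    finally show ?thesis .
  qed
  have "(B ** B) *v x = A *v x" for x
  proof -
    have "x \<in> span E" using E(4) by simp
    moreover have "linear ((*v) (B ** B))" "linear ((*v) A)" by (simp_all add: matrix_vector_mul_linear)
    moreover have "(B ** B) *v e = A *v e" if "e \<in> E" for e
    proof -
      have "(B ** B) *v e = lam e *\<^sub>R e" using lam0[of e]
        by (simp add: matrix_vector_mul_assoc[symmetric] Be that matrix_vector_mult_scaleR)
      also have "\<dots> = A *v e" using E(3) that unfolding lam_def by metis
      finally show ?thesis .
    qed
    ultimately show ?thesis using real_vector.linear_eq_on_span[of "(*v) (B ** B)" "(*v) A" E x] by blast
  qed
  hence BB: "B ** B = A" by (simp add: matrix_eq)
  have inner_B: "x \<bullet> (B *v y) = (\<Sum>e\<in>E. sqrt (lam e) * (e \<bullet> y) * (e \<bullet> x))" for x y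
    unfolding Bv f_def by (simp add: inner_sum_right inner_commute)
  have "transpose B = B"
    by (rule sym_from_inner) (simp add: inner_B mult.commute mult.left_commute)
  moreover have "x \<bullet> (B *v x) \<ge> 0" for x
    unfolding inner_B by (intro sum_nonneg) (simp add: lam0 mult.assoc)
  ultimately have "psd B" unfolding psd_def by simp
  thus ?thesis using BB by blast
qed


lemma mm_diff_l: "(A::real^'n^'n) ** (B - C) = A ** B - A ** C"
  by (simp add: matrix_matrix_mult_def vec_eq_iff algebra_simps sum_subtractf)
lemma mm_diff_r: "((B::real^'n^'n) - C) ** A = B ** A - C ** A"
  by (simp add: matrix_matrix_mult_def vec_eq_iff algebra_simps sum_subtractf)
lemma mm_add_l: "(A::real^'n^'n) ** (B + C) = A ** B + A ** C"
  by (simp add: matrix_matrix_mult_def vec_eq_iff algebra_simps sum.distrib)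
lemma mm_add_r: "((B::real^'n^'n) + C) ** A = B ** A + C ** A"
  by (simp add: matrix_matrix_mult_def vec_eq_iff algebra_simps sum.distrib)
lemma mm_neg_l: "(- (B::real^'n^'n)) ** A = - (B ** A)"
  by (simp add: matrix_matrix_mult_def vec_eq_iff sum_negf)
lemma mm_neg_r: "(A::real^'n^'n) ** (- B) = - (A ** B)"
  by (simp add: matrix_matrix_mult_def vec_eq_iff sum_negf)
lemma trace_neg': "trace (- (A::real^'n^'n)) = - trace A"
  by (simp add: trace_def sum_negf)

lemma trace_quad: "trace (M :: real^'n^'n) = (\<Sum>i\<in>UNIV. axis i 1 \<bullet> (M *v axis i 1))"
  unfolding trace_def by (simp add: matrix_vector_mult_basis column_def inner_axis')

lemma mat_eq_0_cols:
  fixes M :: "real^'n^'n"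
  assumes "\<And>i. M *v axis i 1 = 0"
  shows "M = 0"
proof -
  have "M $ j $ i = 0" for i j
  proof -
    have "(M *v axis i 1) $ j = 0" using assms by simp
    thus ?thesis by (simp add: matrix_vector_mult_basis column_def)
  qed
  thus ?thesis by (simp add: vec_eq_iff)
qed

lemma trace_sandwich_psd:
  fixes B D :: "real^'n^'n"
  assumes "psd B" "transpose D = D"
  shows "trace (D ** B ** D) = (\<Sum>i\<in>UNIV. (D *v axis i 1) \<bullet> (B *v (D *v axis i 1)))"
    and "trace (D ** B ** D) \<ge> 0"
proof -
  show 1: "trace (D ** B ** D) = (\<Sum>i\<in>UNIV. (D *v axis i 1) \<bullet> (B *v (D *v axis i 1)))"
    unfolding trace_quad by (simp add: matrix_vector_mul_assoc[symmetric] sym_inner2[OF assms(2)])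
  show "trace (D ** B ** D) \<ge> 0" unfolding 1 using assms(1) unfolding psd_def by (simp add: sum_nonneg)
qed

lemma psd_sqrt_unique:
  fixes B C :: "real^'n^'n"
  assumes B: "psd B" and C: "psd C" and eq: "B ** B = C ** C"
  shows "B = C"
proof -
  define D where "D = B - C"
  have symB: "transpose B = B" and symC: "transpose C = C" using B C unfolding psd_def by auto
  have symD: "transpose D = D" unfolding D_def using symB symC by (simp add: transpose_def vec_eq_iff)
  have "B ** D + D ** C = B ** B - C ** C" unfolding D_def
    by (simp add: mm_diff_l mm_diff_r algebra_simps)
  hence BD: "B ** D = - (D ** C)" using eq by (simp add: eq_neg_iff_add_eq_0)
  have "D ** B ** D = D ** (B ** D)" by (simp add: matrix_mul_assoc)
  also have "\<dots> = - (D ** D ** C)" using BD by (simp add: mm_neg_r matrix_mul_assoc)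
  finally have "D ** B ** D = - (D ** D ** C)" .
  hence "trace (D ** B ** D) = - trace (D ** (D ** C))" by (simp add: matrix_mul_assoc trace_neg')
  also have "trace (D ** (D ** C)) = trace (D ** C ** D)" by (rule trace_mul_sym)
  finally have tr: "trace (D ** B ** D) + trace (D ** C ** D) = 0" by simp
  have t1: "trace (D ** B ** D) = 0" and t2: "trace (D ** C ** D) = 0"
    using tr trace_sandwich_psd(2)[OF B symD] trace_sandwich_psd(2)[OF C symD] by linarith+
  have "B *v (D *v axis i 1) = 0" for i
  proof -
    have "(\<Sum>i\<in>UNIV. (D *v axis i 1) \<bullet> (B *v (D *v axis i 1))) = 0"
      using t1 trace_sandwich_psd(1)[OF B symD] by simp
    hence "(D *v axis i 1) \<bullet> (B *v (D *v axis i 1)) = 0"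
      using B unfolding psd_def by (subst (asm) sum_nonneg_eq_0_iff) auto
    thus ?thesis by (rule psd_zero[OF B])
  qed
  moreover have "C *v (D *v axis i 1) = 0" for i
  proof -
    have "(\<Sum>i\<in>UNIV. (D *v axis i 1) \<bullet> (C *v (D *v axis i 1))) = 0"
      using t2 trace_sandwich_psd(1)[OF C symD] by simp
    hence "(D *v axis i 1) \<bullet> (C *v (D *v axis i 1)) = 0"
      using C unfolding psd_def by (subst (asm) sum_nonneg_eq_0_iff) auto
    thus ?thesis by (rule psd_zero[OF C])
  qed
  ultimately have DD: "D *v (D *v axis i 1) = 0" for i
    unfolding D_def by (simp add: matrix_vector_mult_diff_rdistrib)
  have "D *v axis i 1 = 0" for i
  proof -
    have "(D *v axis i 1) \<bullet> (D *v axis i 1) = axis i 1 \<bullet> (D *v (D *v axis i 1))"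
      by (simp add: sym_inner2[OF symD])
    thus ?thesis using DD[of i] by simp
  qed
  hence "D = 0" by (rule mat_eq_0_cols)
  thus ?thesis unfolding D_def by simp
qed

lemma msqrt:
  fixes A :: "real^'n^'n"
  assumes "psd A"
  shows "psd (msqrt A)" "msqrt A ** msqrt A = A"
proof -
  have "\<exists>!B. psd B \<and> B ** B = A"
    using psd_sqrt_exists[OF assms] psd_sqrt_unique by metis
  hence "psd (msqrt A) \<and> msqrt A ** msqrt A = A" unfolding msqrt_def by (rule theI')
  thus "psd (msqrt A)" "msqrt A ** msqrt A = A" by auto
qed

lemma msqrt_unique:
  fixes A B :: "real^'n^'n"
  assumes "psd B" "B ** B = A"
  shows "msqrt A = B"
proof -
  have "psd A" unfolding psd_def
  proof
    have sB: "transpose B = B" using assms(1) unfolding psd_def by simp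
    show "transpose A = A" using assms(2) sB by (metis matrix_transpose_mul)
    show "\<forall>x. 0 \<le> x \<bullet> (A *v x)"
    proof
      fix x
      have "x \<bullet> (A *v x) = (B *v x) \<bullet> (B *v x)"
        using assms(2) sym_inner2[OF sB, of x "B *v x"] by (metis matrix_vector_mul_assoc)
      thus "0 \<le> x \<bullet> (A *v x)" by simp
    qed
  qed
  from msqrt[OF this] assms show ?thesis using psd_sqrt_unique by metis
qed

lemma minv:
  fixes A :: "real^'n^'n"
  assumes "invertible A"
  shows "A ** matrix_inv A = mat 1" "matrix_inv A ** A = mat 1"
proof -
  have "\<exists>A'. A ** A' = mat 1 \<and> A' ** A = mat 1" using assms unfolding invertible_def .
  hence "A ** matrix_inv A = mat 1 \<and> matrix_inv A ** A = mat 1"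
    unfolding matrix_inv_def by (rule someI_ex)
  thus "A ** matrix_inv A = mat 1" "matrix_inv A ** A = mat 1" by auto
qed

lemma transpose_diff: "transpose ((A::real^'n^'n) - B) = transpose A - transpose B"
  by (simp add: transpose_def vec_eq_iff)

lemma minv_sym:
  fixes P :: "real^'n^'n"
  assumes "invertible P" "transpose P = P"
  shows "transpose (matrix_inv P) = matrix_inv P"
proof -
  have "transpose (matrix_inv P) ** P = mat 1"
    using arg_cong[OF minv(1)[OF assms(1)], of transpose] assms(2)
    by (simp add: matrix_transpose_mul transpose_mat)
  have "transpose (matrix_inv P) = transpose (matrix_inv P) ** (P ** matrix_inv P)"
    by (simp add: minv(1)[OF assms(1)] matrix_mul_rid)
  also have "\<dots> = (transpose (matrix_inv P) ** P) ** matrix_inv P" by (rule matrix_mul_assoc)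
  also have "\<dots> = matrix_inv P" using \<open>transpose (matrix_inv P) ** P = mat 1\<close> by (simp add: matrix_mul_lid)
  finally show ?thesis .
qed

lemma spd_psd: "spd S \<Longrightarrow> psd S"
  unfolding spd_def psd_def
proof (intro conjI allI)
  fix x :: "real^'a"
  assume "transpose S = S \<and> (\<forall>x. x \<noteq> 0 \<longrightarrow> 0 < x \<bullet> (S *v x))"
  thus "0 \<le> x \<bullet> (S *v x)" by (cases "x = 0") (auto intro: less_imp_le)
qed (auto)

lemma spd_inv: assumes "spd (S::real^'n^'n)" shows "invertible S"
proof -
  have "inj ((*v) S)" unfolding vec.inj_iff_eq_0
  proof (intro allI impI)
    fix x assume "S *v x = 0"
    thus "x = 0" using assms unfolding spd_def by force
  qed
  thus ?thesis using matrix_left_invertible_injective invertible_left_inverse by blast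
qed

lemma psd_inv_spd:
  fixes P :: "real^'n^'n"
  assumes "psd P" "invertible P" shows "spd P"
  unfolding spd_def
proof (intro conjI allI impI)
  show "transpose P = P" using assms unfolding psd_def by simp
  fix x :: "real^'n" assume "x \<noteq> 0"
  have "P *v x \<noteq> 0" using inj_matrix_vector_mult[OF assms(2)] \<open>x \<noteq> 0\<close>
    unfolding vec.inj_iff_eq_0 by blast
  hence "x \<bullet> (P *v x) \<noteq> 0" using psd_zero[OF assms(1)] by blast
  moreover have "x \<bullet> (P *v x) \<ge> 0" using assms(1) unfolding psd_def by simp
  ultimately show "x \<bullet> (P *v x) > 0" by simp
qed

lemma inv_mul_inv: "invertible (A::real^'n^'n) \<Longrightarrow> invertible (B::real^'n^'n) \<Longrightarrow> invertible (A ** B)"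
  unfolding invertible_det_nz det_mul by simp

lemma inv_from_square: "invertible ((B::real^'n^'n) ** B) \<Longrightarrow> invertible B"
  unfolding invertible_det_nz det_mul by simp

lemma msqrt_spd:
  fixes A :: "real^'n^'n"
  assumes "spd A" shows "spd (msqrt A)"
proof (rule psd_inv_spd)
  show "psd (msqrt A)" using msqrt[OF spd_psd[OF assms]] by simp
  show "invertible (msqrt A)" using inv_from_square[of "msqrt A"] msqrt(2)[OF spd_psd[OF assms]] spd_inv[OF assms] by simp
qed

lemma spd_nz: assumes "spd (X::real^'n^'n)" "x \<noteq> 0" shows "X *v x \<noteq> 0"
proof
  assume "X *v x = 0"
  hence "x \<bullet> (X *v x) = 0" by simp
  thus False using assms unfolding spd_def by auto
qed

lemma spd_sandwich:
  fixes X B :: "real^'n^'n"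
  assumes X: "spd X" and B: "spd B"
  shows "spd (X ** B ** X)"
  unfolding spd_def
proof (intro conjI allI impI)
  have sX: "transpose X = X" and sB: "transpose B = B" using X B unfolding spd_def by auto
  show "transpose (X ** B ** X) = X ** B ** X"
    by (simp add: matrix_transpose_mul sX sB matrix_mul_assoc)
  fix x :: "real^'n" assume "x \<noteq> 0"
  hence "X *v x \<noteq> 0" using spd_nz[OF X] by blast
  hence "(X *v x) \<bullet> (B *v (X *v x)) > 0" using B unfolding spd_def by simp
  also have "(X *v x) \<bullet> (B *v (X *v x)) = x \<bullet> (X *v (B *v (X *v x)))"
    by (rule sym_inner2[OF sX, symmetric])
  also have "\<dots> = x \<bullet> ((X ** B ** X) *v x)" by (simp add: matrix_vector_mul_assoc matrix_mul_assoc)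
  finally show "x \<bullet> ((X ** B ** X) *v x) > 0" .
qed

lemma frob_inner: "(M::real^'n^'n) \<bullet> N = trace (transpose M ** N)"
  unfolding inner_vec_def trace_def matrix_matrix_mult_def transpose_def
  apply (simp)
  apply (rule sum.swap)
  done

lemma frob_norm: "(norm (M::real^'n^'n))^2 = trace (transpose M ** M)"
  by (simp add: power2_norm_eq_inner frob_inner)

lemma orth_norm_mul:
  fixes U Z :: "real^'n^'n"
  assumes "orthogonal_matrix U"
  shows "norm (U ** Z) = norm Z"
proof -
  have "transpose (U ** Z) ** (U ** Z) = transpose Z ** ((transpose U ** U) ** Z)"
    by (simp add: matrix_transpose_mul matrix_mul_assoc)
  hence "(norm (U ** Z))^2 = (norm Z)^2"
    using assms unfolding frob_norm orthogonal_matrix by (simp add: matrix_mul_lid)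
  thus ?thesis by simp
qed

lemma orth_vec_norm:
  fixes W :: "real^'n^'n"
  assumes "orthogonal_matrix W"
  shows "norm (W *v x) = norm x"
proof -
  have "orthogonal_transformation ((*v) W)"
    using assms by (simp add: orthogonal_transformation_matrix matrix_vector_mul_linear)
  thus ?thesis by (rule orthogonal_transformation_norm)
qed

lemma trace_psd_orth_le:
  fixes P W :: "real^'n^'n"
  assumes P: "psd P" and W: "orthogonal_matrix W"
  shows "trace (P ** W) \<le> trace P"
proof -
  define Q where "Q = msqrt P"
  have Q: "psd Q" "Q ** Q = P" using msqrt[OF P] unfolding Q_def by auto
  have sQ: "transpose Q = Q" using Q(1) unfolding psd_def by simp
  have "trace (P ** W) = trace (Q ** (Q ** W))" by (simp add: Q(2)[symmetric] matrix_mul_assoc)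
  also have "\<dots> = trace (Q ** W ** Q)" by (rule trace_mul_sym)
  also have "\<dots> = (\<Sum>i\<in>UNIV. (Q *v axis i 1) \<bullet> (W *v (Q *v axis i 1)))"
    unfolding trace_quad by (simp add: matrix_vector_mul_assoc[symmetric] sym_inner2[OF sQ])
  also have "\<dots> \<le> (\<Sum>i\<in>UNIV. (Q *v axis i 1) \<bullet> (Q *v axis i 1))"
  proof (rule sum_mono)
    fix i
    have "(Q *v axis i 1) \<bullet> (W *v (Q *v axis i 1)) \<le> norm (Q *v axis i 1) * norm (W *v (Q *v axis i 1))"
      by (rule norm_cauchy_schwarz)
    also have "\<dots> = (Q *v axis i 1) \<bullet> (Q *v axis i 1)"
      by (simp add: orth_vec_norm[OF W] power2_norm_eq_inner[symmetric] power2_eq_square)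
    finally show "(Q *v axis i 1) \<bullet> (W *v (Q *v axis i 1)) \<le> (Q *v axis i 1) \<bullet> (Q *v axis i 1)" .
  qed
  also have "\<dots> = trace P"
    unfolding trace_quad Q(2)[symmetric] by (simp add: matrix_vector_mul_assoc[symmetric] sym_inner2[OF sQ])
  finally show ?thesis .
qed

lemma trace_transpose': "trace (transpose (M::real^'n^'n)) = trace M"
  by (simp add: trace_def transpose_def)

lemma mm_assoc_var: "(A::real^'n^'n) ** B = C \<Longrightarrow> Z ** A ** B = Z ** C"
  by (simp add: matrix_mul_assoc[symmetric])

lemma norm_expand:
  fixes X Y V :: "real^'n^'n"
  assumes sX: "transpose X = X" and sY: "transpose Y = Y" and V: "orthogonal_matrix V"
  shows "(norm (X - V ** Y))^2 = trace (X ** X) + trace (Y ** Y) - 2 * trace (X ** V ** Y)"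
proof -
  have VV: "transpose V ** V = mat 1" using V by (simp add: orthogonal_matrix)
  have t: "transpose (X - V ** Y) = X - Y ** transpose V"
    by (simp add: transpose_diff matrix_transpose_mul sX sY)
  have "transpose (X - V ** Y) ** (X - V ** Y) =
        X ** X - X ** V ** Y - Y ** transpose V ** X + Y ** (transpose V ** V) ** Y"
    unfolding t by (simp add: mm_diff_l mm_diff_r matrix_mul_assoc algebra_simps)
  also have "\<dots> = X ** X - X ** V ** Y - Y ** transpose V ** X + Y ** Y"
    by (simp add: VV matrix_mul_rid)
  finally have e: "transpose (X - V ** Y) ** (X - V ** Y) = X ** X - X ** V ** Y - Y ** transpose V ** X + Y ** Y" .
  have "trace (Y ** transpose V ** X) = trace (transpose (Y ** transpose V ** X))" by (simp add: trace_transpose')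
  also have "\<dots> = trace (X ** V ** Y)" by (simp add: matrix_transpose_mul sX sY matrix_mul_assoc)
  finally have "trace (Y ** transpose V ** X) = trace (X ** V ** Y)" .
  thus ?thesis unfolding frob_norm e by (simp add: trace_add trace_sub)
qed

lemma bures:
  fixes A B :: "real^'n^'n"
  assumes A: "spd A" and B: "spd B"
  defines "X \<equiv> msqrt A" and "Y \<equiv> msqrt B" and "P \<equiv> msqrt (msqrt A ** B ** msqrt A)"
  shows "\<exists>U. orthogonal_matrix U \<and> trace A + trace B - 2 * trace P = (norm (X - U ** Y))^2
          \<and> (\<forall>V. orthogonal_matrix V \<longrightarrow> trace A + trace B - 2 * trace P \<le> (norm (X - V ** Y))^2)
          \<and> trace (msqrt (msqrt B ** A ** msqrt B)) = trace P"
proof -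
  have Xs: "spd X" and Ys: "spd Y" unfolding X_def Y_def using msqrt_spd A B by auto
  have sX: "transpose X = X" and sY: "transpose Y = Y" using Xs Ys unfolding spd_def by auto
  have XX: "X ** X = A" and YY: "Y ** Y = B" unfolding X_def Y_def using msqrt(2) spd_psd A B by auto
  have XBX: "spd (X ** B ** X)" using spd_sandwich[OF Xs B] .
  have Ps: "spd P" unfolding P_def X_def[symmetric] using msqrt_spd[OF XBX] .
  have PP: "P ** P = X ** B ** X" unfolding P_def X_def[symmetric] using msqrt(2)[OF spd_psd[OF XBX]] .
  have sP: "transpose P = P" using Ps unfolding spd_def by auto
  have Pinv: "invertible P" using spd_inv[OF Ps] .
  define Pi where "Pi = matrix_inv P"
  have PPi: "P ** Pi = mat 1" and PiP: "Pi ** P = mat 1" unfolding Pi_def using minv[OF Pinv] by auto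
  have sPi: "transpose Pi = Pi" unfolding Pi_def using minv_sym[OF Pinv sP] .
  define M where "M = X ** Y"
  have tM: "transpose M = Y ** X" unfolding M_def by (simp add: matrix_transpose_mul sX sY)
  have MMt: "M ** transpose M = P ** P" unfolding tM unfolding M_def PP
    by (simp add: matrix_mul_assoc mm_assoc_var[OF YY])
  define U where "U = Pi ** M"
  have tU: "transpose U = transpose M ** Pi" unfolding U_def by (simp add: matrix_transpose_mul sPi)
  have "U ** transpose U = Pi ** (M ** transpose M) ** Pi" unfolding tU unfolding U_def by (simp add: matrix_mul_assoc)
  also have "\<dots> = (Pi ** P) ** (P ** Pi)" unfolding MMt by (simp add: matrix_mul_assoc)
  also have "\<dots> = mat 1" by (simp add: PiP PPi matrix_mul_lid)
  finally have UUt: "U ** transpose U = mat 1" .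
  hence UtU: "transpose U ** U = mat 1" using matrix_left_right_inverse by blast
  have U: "orthogonal_matrix U" using UtU by (simp add: orthogonal_matrix)
  have PU: "P ** U = M" unfolding U_def by (simp add: matrix_mul_assoc PPi matrix_mul_lid)
  have tM2: "transpose M = transpose U ** P" using arg_cong[OF PU, of transpose]
    by (simp add: matrix_transpose_mul sP)
  have key: "trace (X ** V ** Y) = trace (P ** (V ** transpose U))" for V
  proof -
    have "trace (X ** V ** Y) = trace (X ** (V ** Y))" by (simp add: matrix_mul_assoc)
    also have "\<dots> = trace ((V ** Y) ** X)" by (rule trace_mul_sym)
    also have "\<dots> = trace (V ** transpose M)" by (simp add: tM matrix_mul_assoc)
    also have "\<dots> = trace ((V ** transpose U) ** P)" by (simp add: tM2 matrix_mul_assoc)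
    also have "\<dots> = trace (P ** (V ** transpose U))" by (rule trace_mul_sym)
    finally show ?thesis .
  qed
  have ne: "(norm (X - V ** Y))^2 = trace A + trace B - 2 * trace (P ** (V ** transpose U))"
    if "orthogonal_matrix V" for V
    using norm_expand[OF sX sY that] key XX YY by simp
  show ?thesis
  proof (intro exI[of _ U] conjI allI impI)
    show "orthogonal_matrix U" by (rule U)
    show "trace A + trace B - 2 * trace P = (norm (X - U ** Y))^2"
      using ne[OF U] UUt by (simp add: matrix_mul_rid)
    fix V :: "real^'n^'n" assume V: "orthogonal_matrix V"
    have "orthogonal_matrix (V ** transpose U)" using V U by (simp add: orthogonal_matrix_mul)
    hence "trace (P ** (V ** transpose U)) \<le> trace P" using trace_psd_orth_le spd_psd[OF Ps] by blast
    thus "trace A + trace B - 2 * trace P \<le> (norm (X - V ** Y))^2" using ne[OF V] by simp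
  next
    define R where "R = transpose U ** P ** U"
    have "psd R" unfolding psd_def
    proof (intro conjI allI)
      show "transpose R = R" unfolding R_def by (simp add: matrix_transpose_mul sP matrix_mul_assoc)
      fix x :: "real^'n"
      have "x \<bullet> (R *v x) = x \<bullet> (transpose U *v (P *v (U *v x)))" unfolding R_def
        by (simp add: matrix_vector_mul_assoc matrix_mul_assoc)
      also have "\<dots> = (U *v x) \<bullet> (P *v (U *v x))"
        by (metis dot_lmul_matrix inner_commute transpose_matrix_vector)
      also have "\<dots> \<ge> 0" using spd_psd[OF Ps] unfolding psd_def by simp
      finally show "0 \<le> x \<bullet> (R *v x)" .
    qed
    moreover have "R ** R = Y ** A ** Y"
    proof -
      have "R ** R = transpose U ** P ** (U ** transpose U) ** P ** U" unfolding R_def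
        by (simp add: matrix_mul_assoc)
      also have "\<dots> = transpose U ** P ** P ** U" by (simp add: UUt matrix_mul_rid)
      also have "\<dots> = transpose M ** M" unfolding tM2 unfolding PU[symmetric] by (simp add: matrix_mul_assoc)
      also have "\<dots> = Y ** A ** Y" unfolding tM by (simp add: M_def XX[symmetric] matrix_mul_assoc)
      finally show ?thesis .
    qed
    ultimately have "msqrt (Y ** A ** Y) = R" by (rule msqrt_unique)
    hence "trace (msqrt (msqrt B ** A ** msqrt B)) = trace (P ** U ** transpose U)"
      unfolding Y_def[symmetric] R_def by (metis trace_mul_sym matrix_mul_assoc)
    also have "\<dots> = trace P" by (simp add: matrix_mul_assoc[symmetric] UUt matrix_mul_rid)
    finally show "trace (msqrt (msqrt B ** A ** msqrt B)) = trace P" .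
  qed
qed

lemma trace_scaleR': "trace (c *\<^sub>R (M::real^'n^'n)) = c * trace M"
  by (simp add: trace_def sum_distrib_left)

lemma W2sq_repr:
  fixes A B :: "real^'n^'n"
  assumes A: "spd A" and B: "spd B"
  shows "\<exists>U. orthogonal_matrix U \<and> W2sq m0 A m1 B = (norm (m0 - m1))^2 + (norm (msqrt A - U ** msqrt B))^2
          \<and> (\<forall>V. orthogonal_matrix V \<longrightarrow> W2sq m0 A m1 B \<le> (norm (m0 - m1))^2 + (norm (msqrt A - V ** msqrt B))^2)"
proof -
  have e: "W2sq m0 A m1 B = (norm (m0 - m1))^2 + (trace A + trace B - 2 * trace (msqrt (msqrt A ** B ** msqrt A)))"
    unfolding W2sq_def by (simp add: trace_add trace_sub trace_scaleR')
  from bures[OF A B] obtain U where "orthogonal_matrix U"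
    "trace A + trace B - 2 * trace (msqrt (msqrt A ** B ** msqrt A)) = (norm (msqrt A - U ** msqrt B))^2"
    "\<forall>V. orthogonal_matrix V \<longrightarrow> trace A + trace B - 2 * trace (msqrt (msqrt A ** B ** msqrt A)) \<le> (norm (msqrt A - V ** msqrt B))^2"
    by blast
  thus ?thesis unfolding e by (intro exI[of _ U]) auto
qed

lemma W2sq_nonneg:
  assumes "spd A" "spd B" shows "W2sq m0 A m1 B \<ge> 0"
  using W2sq_repr[OF assms, of m0 m1] by (metis add_nonneg_nonneg zero_le_power2)

lemma W2sq_sym:
  assumes A: "spd A" and B: "spd B" shows "W2sq m0 A m1 B = W2sq m1 B m0 A"
proof -
  have "trace (msqrt (msqrt B ** A ** msqrt B)) = trace (msqrt (msqrt A ** B ** msqrt A))"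
    using bures[OF A B] by blast
  thus ?thesis unfolding W2sq_def by (simp add: trace_add trace_sub trace_scaleR' norm_minus_commute)
qed

lemma W2sq_zero:
  fixes A B :: "real^'n^'n"
  assumes A: "spd A" and B: "spd B"
  shows "W2sq m0 A m1 B = 0 \<longleftrightarrow> m0 = m1 \<and> A = B"
proof
  assume "W2sq m0 A m1 B = 0"
  then obtain U where U: "orthogonal_matrix U" "(norm (m0 - m1))^2 + (norm (msqrt A - U ** msqrt B))^2 = 0"
    using W2sq_repr[OF A B, of m0 m1] by auto
  hence "norm (m0 - m1) = 0" "norm (msqrt A - U ** msqrt B) = 0"
    by (smt (verit) zero_le_power2 power_eq_0_iff)+
  hence m: "m0 = m1" and X: "msqrt A = U ** msqrt B" by auto
  have sX: "transpose (msqrt A) = msqrt A" and sY: "transpose (msqrt B) = msqrt B"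
    using msqrt(1) spd_psd A B unfolding psd_def by blast+
  have "A = transpose (msqrt A) ** msqrt A" using msqrt(2)[OF spd_psd[OF A]] sX by simp
  also have "\<dots> = msqrt B ** (transpose U ** U) ** msqrt B"
    unfolding X by (simp add: matrix_transpose_mul sY matrix_mul_assoc)
  also have "\<dots> = B" using U(1) msqrt(2)[OF spd_psd[OF B]] by (simp add: orthogonal_matrix matrix_mul_rid)
  finally show "m0 = m1 \<and> A = B" using m by simp
next
  assume "m0 = m1 \<and> A = B"
  hence "W2sq m0 A m1 B \<le> 0"
    using W2sq_repr[OF A B, of m0 m1] orthogonal_matrix_id by (fastforce simp: matrix_mul_lid)
  thus "W2sq m0 A m1 B = 0" using W2sq_nonneg[OF A B, of m0 m1] by simp
qed

lemma W2_triangle: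
  fixes A B C :: "real^'n^'n"
  assumes A: "spd A" and B: "spd B" and C: "spd C"
  shows "sqrt (W2sq m0 A m2 C) \<le> sqrt (W2sq m0 A m1 B) + sqrt (W2sq m1 B m2 C)"
proof -
  obtain U1 where U1: "orthogonal_matrix U1"
    "W2sq m0 A m1 B = (norm (m0 - m1))^2 + (norm (msqrt A - U1 ** msqrt B))^2"
    using W2sq_repr[OF A B, of m0 m1] by blast
  obtain U2 where U2: "orthogonal_matrix U2"
    "W2sq m1 B m2 C = (norm (m1 - m2))^2 + (norm (msqrt B - U2 ** msqrt C))^2"
    using W2sq_repr[OF B C, of m1 m2] by blast
  have V: "orthogonal_matrix (U1 ** U2)" using U1(1) U2(1) by (rule orthogonal_matrix_mul)
  have le02: "W2sq m0 A m2 C \<le> (norm (m0 - m2))^2 + (norm (msqrt A - (U1 ** U2) ** msqrt C))^2"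
    using W2sq_repr[OF A C, of m0 m2] V by blast
  define p where "p = norm (m0 - m1)"
  define q where "q = norm (m1 - m2)"
  define a where "a = norm (msqrt A - U1 ** msqrt B)"
  define b where "b = norm (msqrt B - U2 ** msqrt C)"
  have pq: "norm (m0 - m2) \<le> p + q" unfolding p_def q_def by (rule norm_diff_triangle_le[of _ m1]) simp_all
  have "msqrt A - (U1 ** U2) ** msqrt C = (msqrt A - U1 ** msqrt B) + U1 ** (msqrt B - U2 ** msqrt C)"
    by (simp add: mm_diff_l matrix_mul_assoc)
  hence "norm (msqrt A - (U1 ** U2) ** msqrt C) \<le> a + norm (U1 ** (msqrt B - U2 ** msqrt C))"
    unfolding a_def by (metis norm_triangle_ineq)
  hence ab: "norm (msqrt A - (U1 ** U2) ** msqrt C) \<le> a + b"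
    unfolding b_def orth_norm_mul[OF U1(1)] .
  have "W2sq m0 A m2 C \<le> (p + q)^2 + (a + b)^2"
  proof -
    have "(norm (m0 - m2))^2 \<le> (p + q)^2" using pq by (simp add: power_mono)
    moreover have "(norm (msqrt A - (U1 ** U2) ** msqrt C))^2 \<le> (a + b)^2" using ab by (simp add: power_mono)
    ultimately show ?thesis using le02 by linarith
  qed
  hence "sqrt (W2sq m0 A m2 C) \<le> sqrt ((p + q)^2 + (a + b)^2)" by (rule real_sqrt_le_mono)
  also have "\<dots> \<le> sqrt (p^2 + a^2) + sqrt (q^2 + b^2)" by (rule real_sqrt_sum_squares_triangle_ineq)
  also have "\<dots> = sqrt (W2sq m0 A m1 B) + sqrt (W2sq m1 B m2 C)"
    using U1(2) U2(2) unfolding p_def q_def a_def b_def by simp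
  finally show ?thesis .
qed

lemma valid_gmmD:
  assumes "valid_gmm r"
  shows "\<And>k. k < length r \<Longrightarrow> wt r k \<ge> 0" "\<And>k. k < length r \<Longrightarrow> spd (cov r k)"
    "(\<Sum>k < length r. wt r k) = 1"
  using assms unfolding valid_gmm_def by auto

lemma product_coupling:
  assumes "valid_gmm r0" "valid_gmm r1"
  shows "(\<lambda>i j. wt r0 i * wt r1 j) \<in> couplings r0 r1"
  using valid_gmmD[OF assms(1)] valid_gmmD[OF assms(2)]
  unfolding couplings_def by (auto simp: sum_distrib_left[symmetric] sum_distrib_right[symmetric])

lemma cost_nonneg:
  assumes "valid_gmm r0" "valid_gmm r1" "\<pi> \<in> couplings r0 r1"
  shows "gmm_cost r0 r1 \<pi> \<ge> 0"
  unfolding gmm_cost_def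
  using assms(3) valid_gmmD(2)[OF assms(1)] valid_gmmD(2)[OF assms(2)]
  unfolding couplings_def by (auto intro!: sum_nonneg mult_nonneg_nonneg W2sq_nonneg)

lemma cost_set:
  assumes "valid_gmm r0" "valid_gmm r1"
  shows "gmm_cost r0 r1 ` couplings r0 r1 \<noteq> {}" "bdd_below (gmm_cost r0 r1 ` couplings r0 r1)"
    "Inf (gmm_cost r0 r1 ` couplings r0 r1) \<ge> 0"
    "\<And>\<pi>. \<pi> \<in> couplings r0 r1 \<Longrightarrow> Inf (gmm_cost r0 r1 ` couplings r0 r1) \<le> gmm_cost r0 r1 \<pi>"
proof -
  show ne: "gmm_cost r0 r1 ` couplings r0 r1 \<noteq> {}" using product_coupling[OF assms] by blast
  show bb: "bdd_below (gmm_cost r0 r1 ` couplings r0 r1)"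
    using cost_nonneg[OF assms] by (intro bdd_belowI[of _ 0]) auto
  show "Inf (gmm_cost r0 r1 ` couplings r0 r1) \<ge> 0"
    using cost_nonneg[OF assms] ne by (intro cInf_greatest) auto
  fix \<pi> assume "\<pi> \<in> couplings r0 r1"
  thus "Inf (gmm_cost r0 r1 ` couplings r0 r1) \<le> gmm_cost r0 r1 \<pi>"
    using bb by (intro cInf_lower) auto
qed

lemma dist_nonneg: "valid_gmm r0 \<Longrightarrow> valid_gmm r1 \<Longrightarrow> gmm_dist r0 r1 \<ge> 0"
  unfolding gmm_dist_def using cost_set(3) by simp

lemma coupling_transpose:
  "\<pi> \<in> couplings r0 r1 \<Longrightarrow> (\<lambda>i j. \<pi> j i) \<in> couplings r1 r0"
  unfolding couplings_def by auto

lemma cost_transpose: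
  assumes "valid_gmm r0" "valid_gmm r1"
  shows "gmm_cost r1 r0 (\<lambda>i j. \<pi> j i) = gmm_cost r0 r1 \<pi>"
proof -
  have "gmm_cost r1 r0 (\<lambda>i j. \<pi> j i) = (\<Sum>i<length r1. \<Sum>j<length r0.
      W2sq (mean r0 j) (cov r0 j) (mean r1 i) (cov r1 i) * \<pi> j i)"
    unfolding gmm_cost_def
    using valid_gmmD(2)[OF assms(1)] valid_gmmD(2)[OF assms(2)]
    by (intro sum.cong refl) (simp add: W2sq_sym)
  also have "\<dots> = gmm_cost r0 r1 \<pi>" unfolding gmm_cost_def by (rule sum.swap)
  finally show ?thesis .
qed

lemma dist_sym:
  assumes "valid_gmm r0" "valid_gmm r1"
  shows "gmm_dist r0 r1 = gmm_dist r1 r0"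
proof -
  have "gmm_cost r0 r1 ` couplings r0 r1 = gmm_cost r1 r0 ` couplings r1 r0"
  proof
    show "gmm_cost r0 r1 ` couplings r0 r1 \<subseteq> gmm_cost r1 r0 ` couplings r1 r0"
    proof
      fix c assume "c \<in> gmm_cost r0 r1 ` couplings r0 r1"
      then obtain \<pi> where "\<pi> \<in> couplings r0 r1" "c = gmm_cost r0 r1 \<pi>" by auto
      thus "c \<in> gmm_cost r1 r0 ` couplings r1 r0"
        using coupling_transpose cost_transpose[OF assms] by (metis image_eqI)
    qed
    show "gmm_cost r1 r0 ` couplings r1 r0 \<subseteq> gmm_cost r0 r1 ` couplings r0 r1"
    proof
      fix c assume "c \<in> gmm_cost r1 r0 ` couplings r1 r0"
      then obtain \<pi> where "\<pi> \<in> couplings r1 r0" "c = gmm_cost r1 r0 \<pi>" by auto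
      thus "c \<in> gmm_cost r0 r1 ` couplings r0 r1"
        using coupling_transpose cost_transpose[OF assms(2,1)] by (metis image_eqI)
    qed
  qed
  thus ?thesis unfolding gmm_dist_def by simp
qed

lemma minkowski_weighted:
  fixes x y g :: "'a \<Rightarrow> real"
  assumes "finite T" "\<And>t. t \<in> T \<Longrightarrow> g t \<ge> 0"
  shows "sqrt (\<Sum>t\<in>T. g t * (x t + y t)^2) \<le> sqrt (\<Sum>t\<in>T. g t * (x t)^2) + sqrt (\<Sum>t\<in>T. g t * (y t)^2)"
proof -
  have L: "L2_set (\<lambda>t. sqrt (g t) * z t) T = sqrt (\<Sum>t\<in>T. g t * (z t)^2)" for z
    unfolding L2_set_def using assms(2)
    by (intro arg_cong[where f = sqrt] sum.cong refl) (simp add: power_mult_distrib)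
  have "L2_set (\<lambda>t. sqrt (g t) * x t + sqrt (g t) * y t) T
        \<le> L2_set (\<lambda>t. sqrt (g t) * x t) T + L2_set (\<lambda>t. sqrt (g t) * y t) T"
    by (rule L2_set_triangle_ineq)
  thus ?thesis unfolding L[symmetric] by (simp add: distrib_left)
qed


lemma tri_sum: "(\<Sum>i\<in>I. \<Sum>k\<in>K. \<Sum>j\<in>J. (f::'a\<Rightarrow>'b\<Rightarrow>'c\<Rightarrow>real) i k j) = (\<Sum>(i,k,j)\<in>I \<times> K \<times> J. f i k j)"
  by (simp add: sum.cartesian_product)

lemma minkowski3:
  fixes g x y :: "'a \<Rightarrow> 'b \<Rightarrow> 'c \<Rightarrow> real"
  assumes "finite I" "finite K" "finite J"
    "\<And>i k j. i \<in> I \<Longrightarrow> k \<in> K \<Longrightarrow> j \<in> J \<Longrightarrow> g i k j \<ge> 0"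
  shows "sqrt (\<Sum>i\<in>I. \<Sum>k\<in>K. \<Sum>j\<in>J. g i k j * (x i k j + y i k j)^2)
     \<le> sqrt (\<Sum>i\<in>I. \<Sum>k\<in>K. \<Sum>j\<in>J. g i k j * (x i k j)^2) + sqrt (\<Sum>i\<in>I. \<Sum>k\<in>K. \<Sum>j\<in>J. g i k j * (y i k j)^2)"
proof -
  let ?T = "I \<times> K \<times> J"
  have "finite ?T" using assms by simp
  have "sqrt (\<Sum>t\<in>?T. (\<lambda>(i,k,j). g i k j) t * ((\<lambda>(i,k,j). x i k j) t + (\<lambda>(i,k,j). y i k j) t)^2)
     \<le> sqrt (\<Sum>t\<in>?T. (\<lambda>(i,k,j). g i k j) t * ((\<lambda>(i,k,j). x i k j) t)^2) + sqrt (\<Sum>t\<in>?T. (\<lambda>(i,k,j). g i k j) t * ((\<lambda>(i,k,j). y i k j) t)^2)"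
    using assms(4) by (intro minkowski_weighted[OF \<open>finite ?T\<close>]) auto
  thus ?thesis unfolding tri_sum by (simp add: case_prod_beta')
qed

lemma glue:
  assumes v0: "valid_gmm r0" and v1: "valid_gmm r1" and v2: "valid_gmm r2"
    and p1: "\<pi>1 \<in> couplings r0 r1" and p2: "\<pi>2 \<in> couplings r1 r2"
  shows "\<exists>\<pi>3 \<in> couplings r0 r2. sqrt (gmm_cost r0 r2 \<pi>3) \<le> sqrt (gmm_cost r0 r1 \<pi>1) + sqrt (gmm_cost r1 r2 \<pi>2)"
proof -
  define n0 where "n0 = length r0"
  define n1 where "n1 = length r1"
  define n2 where "n2 = length r2"
  define w where "w j = wt r1 j" for j
  have w0: "j < n1 \<Longrightarrow> w j \<ge> 0" for j using valid_gmmD(1)[OF v1] unfolding w_def n1_def by simp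
  have P1: "\<And>i j. i < n0 \<Longrightarrow> j < n1 \<Longrightarrow> \<pi>1 i j \<ge> 0" "\<And>i. i < n0 \<Longrightarrow> (\<Sum>j<n1. \<pi>1 i j) = wt r0 i"
     "\<And>j. j < n1 \<Longrightarrow> (\<Sum>i<n0. \<pi>1 i j) = w j"
    using p1 unfolding couplings_def n0_def n1_def w_def by auto
  have P2: "\<And>j k. j < n1 \<Longrightarrow> k < n2 \<Longrightarrow> \<pi>2 j k \<ge> 0" "\<And>j. j < n1 \<Longrightarrow> (\<Sum>k<n2. \<pi>2 j k) = w j"
     "\<And>k. k < n2 \<Longrightarrow> (\<Sum>j<n1. \<pi>2 j k) = wt r2 k"
    using p2 unfolding couplings_def n2_def n1_def w_def by auto
  have z1: "\<pi>1 i j = 0" if "i < n0" "j < n1" "w j = 0" for i j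
  proof -
    have "(\<Sum>i<n0. \<pi>1 i j) = 0" using P1(3)[OF that(2)] that(3) by simp
    hence "\<forall>i\<in>{..<n0}. \<pi>1 i j = 0" using P1(1) that(2) by (subst (asm) sum_nonneg_eq_0_iff) auto
    thus ?thesis using that(1) by simp
  qed
  have z2: "\<pi>2 j k = 0" if "j < n1" "k < n2" "w j = 0" for j k
  proof -
    have "(\<Sum>k<n2. \<pi>2 j k) = 0" using P2(2)[OF that(1)] that(3) by simp
    hence "\<forall>k\<in>{..<n2}. \<pi>2 j k = 0" using P2(1) that(1) by (subst (asm) sum_nonneg_eq_0_iff) auto
    thus ?thesis using that(2) by simp
  qed
  define g where "g i j k = (if w j = 0 then 0 else \<pi>1 i j * \<pi>2 j k / w j)" for i j k
  have g0: "g i j k \<ge> 0" if "i < n0" "j < n1" "k < n2" for i j k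
    unfolding g_def using P1(1) P2(1) w0 that by auto
  have gk: "(\<Sum>k<n2. g i j k) = \<pi>1 i j" if "i < n0" "j < n1" for i j
  proof (cases "w j = 0")
    case True thus ?thesis unfolding g_def using z1[OF that True] by simp
  next
    case False
    have "(\<Sum>k<n2. g i j k) = \<pi>1 i j * (\<Sum>k<n2. \<pi>2 j k) / w j"
      unfolding g_def using False by (simp add: sum_distrib_left sum_divide_distrib)
    thus ?thesis using P2(2)[OF that(2)] False by simp
  qed
  have gi: "(\<Sum>i<n0. g i j k) = \<pi>2 j k" if "j < n1" "k < n2" for j k
  proof (cases "w j = 0")
    case True thus ?thesis unfolding g_def using z2[OF that True] by simp
  next
    case False
    have "(\<Sum>i<n0. g i j k) = (\<Sum>i<n0. \<pi>1 i j) * \<pi>2 j k / w j"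
      unfolding g_def using False by (simp add: sum_distrib_right sum_divide_distrib)
    thus ?thesis using P1(3)[OF that(1)] False by simp
  qed
  define \<pi>3 where "\<pi>3 i k = (\<Sum>j<n1. g i j k)" for i k
  have c3: "\<pi>3 \<in> couplings r0 r2" unfolding couplings_def n0_def[symmetric] n2_def[symmetric]
  proof (intro CollectI conjI allI impI)
    fix i k assume "i < n0" "k < n2"
    thus "\<pi>3 i k \<ge> 0" unfolding \<pi>3_def using g0 by (auto intro: sum_nonneg)
  next
    fix i assume i: "i < n0"
    have "(\<Sum>k<n2. \<pi>3 i k) = (\<Sum>j<n1. \<Sum>k<n2. g i j k)" unfolding \<pi>3_def by (rule sum.swap)
    also have "\<dots> = (\<Sum>j<n1. \<pi>1 i j)" using gk i by simp
    also have "\<dots> = wt r0 i" using P1(2) i by simp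
    finally show "(\<Sum>k<n2. \<pi>3 i k) = wt r0 i" .
  next
    fix k assume k: "k < n2"
    have "(\<Sum>i<n0. \<pi>3 i k) = (\<Sum>j<n1. \<Sum>i<n0. g i j k)" unfolding \<pi>3_def by (rule sum.swap)
    also have "\<dots> = (\<Sum>j<n1. \<pi>2 j k)" using gi k by simp
    also have "\<dots> = wt r2 k" using P2(3) k by simp
    finally show "(\<Sum>i<n0. \<pi>3 i k) = wt r2 k" .
  qed
  define c01 where "c01 i j = W2sq (mean r0 i) (cov r0 i) (mean r1 j) (cov r1 j)" for i j
  define c12 where "c12 j k = W2sq (mean r1 j) (cov r1 j) (mean r2 k) (cov r2 k)" for j k
  define c02 where "c02 i k = W2sq (mean r0 i) (cov r0 i) (mean r2 k) (cov r2 k)" for i k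
  have spd0: "i < n0 \<Longrightarrow> spd (cov r0 i)" for i using valid_gmmD(2)[OF v0] n0_def by simp
  have spd1: "j < n1 \<Longrightarrow> spd (cov r1 j)" for j using valid_gmmD(2)[OF v1] n1_def by simp
  have spd2: "k < n2 \<Longrightarrow> spd (cov r2 k)" for k using valid_gmmD(2)[OF v2] n2_def by simp
  have tri: "c02 i k \<le> (sqrt (c01 i j) + sqrt (c12 j k))^2" if "i < n0" "j < n1" "k < n2" for i j k
  proof -
    have c0: "c02 i k \<ge> 0" unfolding c02_def using W2sq_nonneg spd0 spd2 that by blast
    have "sqrt (c02 i k) \<le> sqrt (c01 i j) + sqrt (c12 j k)"
      unfolding c01_def c12_def c02_def using W2_triangle spd0 spd1 spd2 that by blast
    hence "(sqrt (c02 i k))^2 \<le> (sqrt (c01 i j) + sqrt (c12 j k))^2" using c0 by (intro power_mono) auto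
    thus ?thesis using c0 by simp
  qed
  have cost3: "gmm_cost r0 r2 \<pi>3 = (\<Sum>i<n0. \<Sum>k<n2. \<Sum>j<n1. g i j k * c02 i k)"
    unfolding gmm_cost_def \<pi>3_def c02_def n0_def n1_def n2_def
    by (simp add: sum_distrib_left sum_distrib_right mult.commute)
  have "gmm_cost r0 r2 \<pi>3 \<le> (\<Sum>i<n0. \<Sum>k<n2. \<Sum>j<n1. g i j k * (sqrt (c01 i j) + sqrt (c12 j k))^2)"
    unfolding cost3 using g0 tri by (intro sum_mono mult_left_mono) auto
  hence "sqrt (gmm_cost r0 r2 \<pi>3) \<le> sqrt (\<Sum>i<n0. \<Sum>k<n2. \<Sum>j<n1. g i j k * (sqrt (c01 i j) + sqrt (c12 j k))^2)"
    by (rule real_sqrt_le_mono)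
  also have "\<dots> \<le> sqrt (\<Sum>i<n0. \<Sum>k<n2. \<Sum>j<n1. g i j k * (sqrt (c01 i j))^2)
               + sqrt (\<Sum>i<n0. \<Sum>k<n2. \<Sum>j<n1. g i j k * (sqrt (c12 j k))^2)"
    using g0 by (intro minkowski3) auto
  also have "(\<Sum>i<n0. \<Sum>k<n2. \<Sum>j<n1. g i j k * (sqrt (c01 i j))^2) = gmm_cost r0 r1 \<pi>1"
  proof -
    have nn: "i < n0 \<Longrightarrow> j < n1 \<Longrightarrow> c01 i j \<ge> 0" for i j
      using W2sq_nonneg spd0 spd1 unfolding c01_def by blast
    have "(\<Sum>i<n0. \<Sum>k<n2. \<Sum>j<n1. g i j k * (sqrt (c01 i j))^2) = (\<Sum>i<n0. \<Sum>k<n2. \<Sum>j<n1. g i j k * c01 i j)"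
      using nn by (intro sum.cong refl) simp
    also have "\<dots> = (\<Sum>i<n0. \<Sum>j<n1. \<Sum>k<n2. g i j k * c01 i j)"
      by (rule sum.cong[OF refl]) (rule sum.swap)
    also have "\<dots> = (\<Sum>i<n0. \<Sum>j<n1. c01 i j * \<pi>1 i j)"
      by (intro sum.cong refl) (simp add: sum_distrib_right[symmetric] gk)
    finally show ?thesis unfolding gmm_cost_def c01_def n0_def n1_def .
  qed
  also have "(\<Sum>i<n0. \<Sum>k<n2. \<Sum>j<n1. g i j k * (sqrt (c12 j k))^2) = gmm_cost r1 r2 \<pi>2"
  proof -
    have nn: "j < n1 \<Longrightarrow> k < n2 \<Longrightarrow> c12 j k \<ge> 0" for j k
      using W2sq_nonneg spd1 spd2 unfolding c12_def by blast
    have "(\<Sum>i<n0. \<Sum>k<n2. \<Sum>j<n1. g i j k * (sqrt (c12 j k))^2) = (\<Sum>i<n0. \<Sum>k<n2. \<Sum>j<n1. g i j k * c12 j k)"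
      using nn by (intro sum.cong refl) simp
    also have "\<dots> = (\<Sum>k<n2. \<Sum>j<n1. \<Sum>i<n0. g i j k * c12 j k)"
      by (subst sum.swap) (rule sum.cong[OF refl], rule sum.swap)
    also have "\<dots> = (\<Sum>j<n1. \<Sum>k<n2. \<Sum>i<n0. g i j k * c12 j k)" by (rule sum.swap)
    also have "\<dots> = (\<Sum>j<n1. \<Sum>k<n2. c12 j k * \<pi>2 j k)"
      by (intro sum.cong refl) (simp add: sum_distrib_right[symmetric] gi)
    finally show ?thesis unfolding gmm_cost_def c12_def n1_def n2_def .
  qed
  finally show ?thesis using c3 by blast
qed

lemma lim_exp_a:
  fixes k c :: real
  assumes "k > 0"
  shows "((\<lambda>s. exp (- k * s^2 / 2 + c * s)) \<longlongrightarrow> 0) at_top"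
  using assms by real_asymp

lemma lim_exp_b:
  fixes c :: real
  assumes "c < 0"
  shows "((\<lambda>s. exp (c * s)) \<longlongrightarrow> 0) at_top"
  using assms by real_asymp


lemma exp_indep_pairs:
  fixes P :: "(real \<times> real) set" and d :: "real \<times> real \<Rightarrow> real"
  assumes "finite P" "\<And>s. (\<Sum>p\<in>P. d p * exp (- fst p * s^2 / 2 + snd p * s)) = 0"
  shows "\<forall>p\<in>P. d p = 0"
  using assms
proof (induction "card P" arbitrary: P rule: less_induct)
  case less
  show ?case
  proof (cases "P = {}")
    case True thus ?thesis by simp
  next
    case False
    define a0 where "a0 = Min (fst ` P)"
    have a0P: "a0 \<in> fst ` P" unfolding a0_def using less(2) False by simp
    define P0 where "P0 = {p \<in> P. fst p = a0}"
    have fP0: "finite P0" "P0 \<noteq> {}" unfolding P0_def using less(2) a0P by auto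
    define b0 where "b0 = Max (snd ` P0)"
    have b0P: "b0 \<in> snd ` P0" unfolding b0_def using fP0 by simp
    define p0 where "p0 = (a0, b0)"
    have p0P: "p0 \<in> P" using b0P unfolding p0_def P0_def by auto
    have other: "fst p > a0 \<or> (fst p = a0 \<and> snd p < b0)" if "p \<in> P" "p \<noteq> p0" for p
    proof -
      have "fst p \<ge> a0" unfolding a0_def using less(2) that(1) by simp
      moreover have "snd p \<le> b0" if "fst p = a0" unfolding b0_def using fP0 \<open>p \<in> P\<close> that
        unfolding P0_def by (intro Max_ge) auto
      moreover have "\<not> (fst p = a0 \<and> snd p = b0)" using that(2) unfolding p0_def by (cases p) auto
      ultimately show ?thesis by force
    qed
    define g where "g s = (\<Sum>p\<in>P. d p * exp (- (fst p - a0) * s^2 / 2 + (snd p - b0) * s))" for s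
    have g0: "g s = 0" for s
    proof -
      have "g s = exp (a0 * s^2 / 2 - b0 * s) * (\<Sum>p\<in>P. d p * exp (- fst p * s^2 / 2 + snd p * s))"
        unfolding g_def sum_distrib_left
        by (intro sum.cong refl) (auto simp: exp_add[symmetric] field_simps)
      thus ?thesis using less(3) by simp
    qed
    have lim: "(g \<longlongrightarrow> d p0) at_top"
    proof -
      have "(g \<longlongrightarrow> (\<Sum>p\<in>P. if p = p0 then d p else 0)) at_top"
        unfolding g_def
      proof (intro tendsto_sum)
        fix p assume p: "p \<in> P"
        show "((\<lambda>s. d p * exp (- (fst p - a0) * s^2 / 2 + (snd p - b0) * s)) \<longlongrightarrow> (if p = p0 then d p else 0)) at_top"
        proof (cases "p = p0")
          case True thus ?thesis unfolding p0_def by simp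
        next
          case False
          have "((\<lambda>s. exp (- (fst p - a0) * s^2 / 2 + (snd p - b0) * s)) \<longlongrightarrow> 0) at_top"
          proof (cases "fst p > a0")
            case True thus ?thesis using lim_exp_a[of "fst p - a0" "snd p - b0"] by simp
          next
            case False
            hence "fst p = a0" "snd p < b0" using other[OF p \<open>p \<noteq> p0\<close>] by auto
            thus ?thesis using lim_exp_b[of "snd p - b0"] by simp
          qed
          thus ?thesis using False by (auto intro: tendsto_mult_right_zero)
        qed
      qed
      also have "(\<Sum>p\<in>P. if p = p0 then d p else 0) = d p0" using less(2) p0P by simp
      finally show ?thesis .
    qed
    moreover have "g = (\<lambda>s. 0)" using g0 by (simp add: fun_eq_iff)
    hence "(g \<longlongrightarrow> 0) at_top" by simp
    ultimately have d0: "d p0 = 0" using tendsto_unique[OF trivial_limit_at_top_linorder] by blast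
    define P' where "P' = P - {p0}"
    have "card P' < card P" unfolding P'_def using less(2) p0P by (rule card_Diff1_less)
    moreover have "finite P'" unfolding P'_def using less(2) by simp
    moreover have "(\<Sum>p\<in>P'. d p * exp (- fst p * s^2 / 2 + snd p * s)) = 0" for s
      using less(3)[of s] sum.remove[OF less(2) p0P, of "\<lambda>p. d p * exp (- fst p * s^2 / 2 + snd p * s)"] d0
      unfolding P'_def by simp
    ultimately have "\<forall>p\<in>P'. d p = 0" using less(1) by blast
    thus ?thesis using d0 unfolding P'_def by auto
  qed
qed

lemma exp_indep:
  fixes I :: "'a set" and a b c :: "'a \<Rightarrow> real"
  assumes "finite I" "\<And>s. (\<Sum>i\<in>I. c i * exp (- a i * s^2 / 2 + b i * s)) = 0" "j \<in> I"
  shows "(\<Sum>i\<in>{i\<in>I. (a i, b i) = (a j, b j)}. c i) = 0"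
proof -
  let ?pr = "\<lambda>i. (a i, b i)"
  define d where "d p = (\<Sum>i\<in>{i\<in>I. ?pr i = p}. c i)" for p
  have "(\<Sum>p\<in>?pr ` I. d p * exp (- fst p * s^2 / 2 + snd p * s)) = 0" for s
  proof -
    have "(\<Sum>p\<in>?pr ` I. d p * exp (- fst p * s^2 / 2 + snd p * s))
        = (\<Sum>p\<in>?pr ` I. \<Sum>i\<in>{i\<in>I. ?pr i = p}. c i * exp (- a i * s^2 / 2 + b i * s))"
      unfolding d_def sum_distrib_right by (intro sum.cong refl) auto
    also have "\<dots> = (\<Sum>i\<in>I. c i * exp (- a i * s^2 / 2 + b i * s))"
      using assms(1) by (intro sum.group) auto
    finally show ?thesis using assms(2) by simp
  qed
  hence "\<forall>p\<in>?pr ` I. d p = 0" using assms(1) by (intro exp_indep_pairs) auto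
  thus ?thesis using assms(3) unfolding d_def by auto
qed

lemma polarize_zero:
  fixes D :: "real^'n^'n"
  assumes sym: "transpose D = D" and z: "\<And>w. w \<bullet> (D *v w) = 0"
  shows "D = 0"
proof -
  have xy: "x \<bullet> (D *v y) = 0" for x y
  proof -
    have "(x + y) \<bullet> (D *v (x + y)) = x \<bullet> (D *v x) + 2 * (x \<bullet> (D *v y)) + y \<bullet> (D *v y)"
      using sym_inner[OF sym, of x y]
      by (simp add: matrix_vector_right_distrib inner_add_left inner_add_right)
    thus ?thesis using z[of "x + y"] z[of x] z[of y] by simp
  qed
  have "D *v y = 0" for y using xy[of "D *v y" y] by simp
  thus ?thesis by (simp add: matrix_eq)
qed

lemma quad_bad_finite:
  fixes \<alpha> \<beta> \<gamma> \<delta> \<epsilon> s0 :: real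
  assumes "\<alpha> + \<beta> * s0 + \<gamma> * s0^2 \<noteq> 0 \<or> \<delta> + \<epsilon> * s0 \<noteq> 0"
  shows "finite {s. \<alpha> + \<beta> * s + \<gamma> * s^2 = 0 \<and> \<delta> + \<epsilon> * s = 0}"
proof (cases "\<alpha> + \<beta> * s0 + \<gamma> * s0^2 \<noteq> 0")
  case True
  define p where "p = [:\<alpha>, \<beta>, \<gamma>:]"
  have pe: "poly p s = \<alpha> + \<beta> * s + \<gamma> * s^2" for s unfolding p_def by (simp add: algebra_simps power2_eq_square)
  have "p \<noteq> 0" using True pe[of s0] by auto
  hence "finite {s. poly p s = 0}" by (rule poly_roots_finite)
  thus ?thesis by (rule finite_subset[rotated]) (auto simp: pe)
next
  case False
  hence F: "\<delta> + \<epsilon> * s0 \<noteq> 0" using assms by simp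
  define p where "p = [:\<delta>, \<epsilon>:]"
  have pe: "poly p s = \<delta> + \<epsilon> * s" for s unfolding p_def by (simp add: algebra_simps)
  have "p \<noteq> 0" using F pe[of s0] by auto
  hence "finite {s. poly p s = 0}" by (rule poly_roots_finite)
  thus ?thesis by (rule finite_subset[rotated]) (auto simp: pe)
qed

lemma line_quad:
  fixes D :: "real^'n^'n"
  shows "(v0 + s *\<^sub>R u) \<bullet> (D *v (v0 + s *\<^sub>R u)) =
    v0 \<bullet> (D *v v0) + (u \<bullet> (D *v v0) + v0 \<bullet> (D *v u)) * s + u \<bullet> (D *v u) * s^2"
  "h \<bullet> (v0 + s *\<^sub>R u) = h \<bullet> v0 + (h \<bullet> u) * s"
  by (simp_all add: matrix_vector_right_distrib matrix_vector_mult_scaleR inner_add_left inner_add_right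
      algebra_simps power2_eq_square)

lemma separate:
  fixes F :: "((real^'n^'n) \<times> (real^'n)) set"
  assumes "finite F" "\<And>D h. (D, h) \<in> F \<Longrightarrow> transpose D = D \<and> (D \<noteq> 0 \<or> h \<noteq> 0)"
  shows "\<exists>v. \<forall>(D, h)\<in>F. v \<bullet> (D *v v) \<noteq> 0 \<or> h \<bullet> v \<noteq> 0"
  using assms
proof (induction F rule: finite_induct)
  case empty thus ?case by simp
next
  case (insert Dh F)
  obtain D h where Dh: "Dh = (D, h)" by (cases Dh)
  obtain v0 where v0: "\<forall>(D, h)\<in>F. v0 \<bullet> (D *v v0) \<noteq> 0 \<or> h \<bullet> v0 \<noteq> 0"
    using insert.IH insert.prems by blast
  have Dh_prop: "transpose D = D" "D \<noteq> 0 \<or> h \<noteq> 0" using insert.prems[of D h] Dh by auto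
  obtain w where w: "w \<bullet> (D *v w) \<noteq> 0 \<or> h \<bullet> w \<noteq> 0"
  proof (cases "D = 0")
    case True
    hence "h \<bullet> h \<noteq> 0" using Dh_prop by simp
    thus ?thesis using that by blast
  next
    case False
    hence "\<exists>w. w \<bullet> (D *v w) \<noteq> 0" using polarize_zero[OF Dh_prop(1)] by blast
    thus ?thesis using that by blast
  qed
  define u where "u = w - v0"
  define bad where "bad = (\<lambda>(D', h'). {s. (v0 + s *\<^sub>R u) \<bullet> (D' *v (v0 + s *\<^sub>R u)) = 0 \<and> h' \<bullet> (v0 + s *\<^sub>R u) = 0})"
  have fin_bad: "finite (bad Dh')" if "Dh' \<in> insert Dh F" for Dh'
  proof -
    obtain D' h' where D'h': "Dh' = (D', h')" by (cases Dh')
    have ex: "\<exists>s0. (v0 + s0 *\<^sub>R u) \<bullet> (D' *v (v0 + s0 *\<^sub>R u)) \<noteq> 0 \<or> h' \<bullet> (v0 + s0 *\<^sub>R u) \<noteq> 0"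
    proof (cases "Dh' = Dh")
      case True
      hence "D' = D" "h' = h" using Dh D'h' by auto
      thus ?thesis using w unfolding u_def by (intro exI[of _ 1]) simp
    next
      case False
      hence "(D', h') \<in> F" using that D'h' by auto
      thus ?thesis using v0 by (intro exI[of _ 0]) auto
    qed
    then obtain s0 where "(v0 + s0 *\<^sub>R u) \<bullet> (D' *v (v0 + s0 *\<^sub>R u)) \<noteq> 0 \<or> h' \<bullet> (v0 + s0 *\<^sub>R u) \<noteq> 0" by blast
    hence "finite {s. v0 \<bullet> (D' *v v0) + (u \<bullet> (D' *v v0) + v0 \<bullet> (D' *v u)) * s + u \<bullet> (D' *v u) * s^2 = 0
                     \<and> h' \<bullet> v0 + (h' \<bullet> u) * s = 0}"
      unfolding line_quad by (intro quad_bad_finite) 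
    thus ?thesis unfolding bad_def D'h' line_quad by simp
  qed
  have "finite (\<Union>Dh'\<in>insert Dh F. bad Dh')" using insert.hyps(1) fin_bad by blast
  then obtain s where s: "s \<notin> (\<Union>Dh'\<in>insert Dh F. bad Dh')"
    using ex_new_if_finite[OF infinite_UNIV_char_0] by blast
  show ?case
  proof (intro exI[of _ "v0 + s *\<^sub>R u"] ballI)
    fix Dh' assume "Dh' \<in> insert Dh F"
    hence "s \<notin> bad Dh'" using s by blast
    thus "case Dh' of (D, h) \<Rightarrow> (v0 + s *\<^sub>R u) \<bullet> (D *v (v0 + s *\<^sub>R u)) \<noteq> 0 \<or> h \<bullet> (v0 + s *\<^sub>R u) \<noteq> 0"
      unfolding bad_def by (cases Dh') auto
  qed
qed


lemma ae_cont_eq: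
  fixes f g :: "real^'n \<Rightarrow> real"
  assumes cf: "continuous_on UNIV f" and cg: "continuous_on UNIV g" and ae: "AE x in lborel. f x = g x"
  shows "f x = g x"
proof (rule ccontr)
  assume ne: "f x \<noteq> g x"
  define A where "A = (\<lambda>x. f x - g x) -` (- {0})"
  have "open A" unfolding A_def
    by (rule open_vimage) (auto intro: continuous_on_diff cf cg)
  moreover have "x \<in> A" unfolding A_def using ne by simp
  ultimately obtain a b where ab: "box a b \<subseteq> A" "x \<in> box a b" "\<forall>i\<in>Basis. a \<bullet> i < b \<bullet> i"
    using open_contains_box by metis
  have "AE y in lborel. y \<notin> box a b"
    using ae by eventually_elim (use ab(1) A_def in auto)
  hence "box a b \<in> null_sets lborel" by (subst AE_iff_null_sets) auto
  hence "emeasure lborel (box a b) = 0" by auto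
  moreover have "emeasure lborel (box a b) > 0"
    using ab(3) by (subst emeasure_lborel_box) (auto intro!: prod_pos simp: inner_diff_left less_imp_le)
  ultimately show False by simp
qed

lemma spd_det_pos:
  fixes S :: "real^'n^'n"
  assumes "spd S" shows "det S > 0"
proof -
  have X: "spd (msqrt S)" using msqrt_spd[OF assms] .
  have "det (msqrt S) \<noteq> 0" using spd_inv[OF X] by (simp add: invertible_det_nz)
  moreover have "det S = det (msqrt S) * det (msqrt S)"
    using msqrt(2)[OF spd_psd[OF assms]] by (metis det_mul)
  ultimately show ?thesis by (simp add: zero_less_mult_iff linorder_neq_iff) blast
qed

lemma pdf_line:
  fixes S :: "real^'n^'n"
  assumes "spd S"
  shows "gauss_pdf m S (s *\<^sub>R v) =
    ((2 * pi) powr (- real CARD('n) / 2) * det S powr (-1/2) * exp (- (m \<bullet> (matrix_inv S *v m)) / 2))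
    * exp (- (v \<bullet> (matrix_inv S *v v)) * s^2 / 2 + (v \<bullet> (matrix_inv S *v m)) * s)"
proof -
  let ?Q = "matrix_inv S"
  have sQ: "transpose ?Q = ?Q" using minv_sym[OF spd_inv[OF assms]] assms unfolding spd_def by simp
  have "(s *\<^sub>R v - m) \<bullet> (?Q *v (s *\<^sub>R v - m)) = s^2 * (v \<bullet> (?Q *v v)) - 2 * s * (v \<bullet> (?Q *v m)) + m \<bullet> (?Q *v m)"
    using sym_inner[OF sQ, of m v]
    by (simp add: matrix_vector_mult_diff_distrib matrix_vector_mult_scaleR inner_diff_left inner_diff_right
        algebra_simps power2_eq_square)
  hence "exp (- ((s *\<^sub>R v - m) \<bullet> (?Q *v (s *\<^sub>R v - m))) / 2)
      = exp (- (m \<bullet> (?Q *v m)) / 2) * exp (- (v \<bullet> (?Q *v v)) * s^2 / 2 + (v \<bullet> (?Q *v m)) * s)"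
    by (simp add: exp_add[symmetric] field_simps)
  thus ?thesis unfolding gauss_pdf_def by (simp add: mult.assoc)
qed

lemma pdf_const_pos:
  fixes S :: "real^'n^'n"
  assumes "spd S"
  shows "(2 * pi) powr (- real CARD('n) / 2) * det S powr (-1/2) * exp (- (m \<bullet> (matrix_inv S *v m)) / 2) > 0"
  using spd_det_pos[OF assms] by (intro mult_pos_pos) auto


lemma gauss_indep:
  fixes \<Theta> :: "((real^'n) \<times> (real^'n^'n)) set"
  assumes fin: "finite \<Theta>" and spdT: "\<And>t. t \<in> \<Theta> \<Longrightarrow> spd (snd t)"
    and z: "\<And>x. (\<Sum>t\<in>\<Theta>. a t * gauss_pdf (fst t) (snd t) x) = 0"
  shows "\<forall>t\<in>\<Theta>. a t = 0"
proof
  fix t0 assume t0: "t0 \<in> \<Theta>"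
  define Q where "Q t = matrix_inv (snd t)" for t :: "(real^'n) \<times> (real^'n^'n)"
  define h where "h t = Q t *v fst t" for t
  have sQ: "transpose (Q t) = Q t" if "t \<in> \<Theta>" for t
    unfolding Q_def using minv_sym[OF spd_inv[OF spdT[OF that]]] spdT[OF that] unfolding spd_def by simp
  have inv1: "snd t ** Q t = mat 1" "Q t ** snd t = mat 1" if "t \<in> \<Theta>" for t
    unfolding Q_def using minv[OF spd_inv[OF spdT[OF that]]] by auto
  define F where "F = (\<lambda>t. (Q t - Q t0, h t - h t0)) ` (\<Theta> - {t0})"
  have "finite F" unfolding F_def using fin by simp
  moreover have "transpose D = D \<and> (D \<noteq> 0 \<or> k \<noteq> 0)" if "(D, k) \<in> F" for D k
  proof -
    from that obtain t where t1: "t \<in> \<Theta> - {t0}" and t2: "(D, k) = (Q t - Q t0, h t - h t0)"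
      unfolding F_def by blast
    have t: "t \<in> \<Theta>" "t \<noteq> t0" "D = Q t - Q t0" "k = h t - h t0" using t1 t2 by auto
    have "transpose D = D" using t sQ[OF t(1)] sQ[OF t0] by (simp add: transpose_diff)
    moreover have "D \<noteq> 0 \<or> k \<noteq> 0"
    proof (rule ccontr)
      assume "\<not> (D \<noteq> 0 \<or> k \<noteq> 0)"
      hence QQ: "Q t = Q t0" and hh: "h t = h t0" using t by auto
      have "snd t = snd t ** (Q t0 ** snd t0)" using inv1(2)[OF t0] by (simp add: matrix_mul_rid)
      also have "\<dots> = (snd t ** Q t) ** snd t0" using QQ by (simp add: matrix_mul_assoc)
      also have "\<dots> = snd t0" using inv1(1)[OF t(1)] by (simp add: matrix_mul_lid)
      finally have SS: "snd t = snd t0" .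
      have "fst t = (snd t ** Q t) *v fst t" using inv1(1)[OF t(1)] by (simp add: matrix_vector_mul_lid)
      also have "\<dots> = snd t *v h t" unfolding h_def by (simp add: matrix_vector_mul_assoc)
      also have "\<dots> = snd t0 *v h t0" using SS hh by simp
      also have "\<dots> = fst t0" unfolding h_def using inv1(1)[OF t0]
        by (simp add: matrix_vector_mul_assoc matrix_vector_mul_lid)
      finally have "fst t = fst t0" .
      hence "t = t0" using SS by (simp add: prod_eq_iff)
      thus False using t(2) by simp
    qed
    ultimately show ?thesis by simp
  qed
  ultimately obtain v where v: "\<forall>(D, k)\<in>F. v \<bullet> (D *v v) \<noteq> 0 \<or> k \<bullet> v \<noteq> 0"
    using separate[of F] by blast
  define aa where "aa t = v \<bullet> (Q t *v v)" for t
  define bb where "bb t = v \<bullet> (Q t *v fst t)" for t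
  define C where "C t = (2 * pi) powr (- real CARD('n) / 2) * det (snd t) powr (-1/2)
      * exp (- (fst t \<bullet> (Q t *v fst t)) / 2)" for t
  have sep: "(aa t, bb t) \<noteq> (aa t0, bb t0)" if "t \<in> \<Theta>" "t \<noteq> t0" for t
  proof -
    have "(Q t - Q t0, h t - h t0) \<in> F" unfolding F_def using that by auto
    hence "v \<bullet> ((Q t - Q t0) *v v) \<noteq> 0 \<or> (h t - h t0) \<bullet> v \<noteq> 0" using v by auto
    thus ?thesis unfolding aa_def bb_def h_def
      by (auto simp: matrix_vector_mult_diff_rdistrib inner_diff_right inner_diff_left inner_commute)
  qed
  have "(\<Sum>t\<in>\<Theta>. (a t * C t) * exp (- aa t * s^2 / 2 + bb t * s)) = 0" for s
  proof -
    have "(\<Sum>t\<in>\<Theta>. (a t * C t) * exp (- aa t * s^2 / 2 + bb t * s))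
        = (\<Sum>t\<in>\<Theta>. a t * gauss_pdf (fst t) (snd t) (s *\<^sub>R v))"
      using spdT unfolding aa_def bb_def C_def Q_def by (intro sum.cong refl) (simp add: pdf_line)
    thus ?thesis using z by simp
  qed
  hence "(\<Sum>t\<in>{t\<in>\<Theta>. (aa t, bb t) = (aa t0, bb t0)}. a t * C t) = 0"
    using exp_indep[OF fin _ t0, of "\<lambda>t. a t * C t" aa bb] by blast
  moreover have "{t\<in>\<Theta>. (aa t, bb t) = (aa t0, bb t0)} = {t0}" using sep t0 by auto
  ultimately have "a t0 * C t0 = 0" by simp
  moreover have "C t0 > 0" unfolding C_def Q_def using pdf_const_pos[OF spdT[OF t0]] by simp
  ultimately show "a t0 = 0" by simp
qed

definition gdens :: "('n::finite) gmm \<Rightarrow> real^'n \<Rightarrow> real" where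
  "gdens r x = (\<Sum>k<length r. wt r k * gauss_pdf (mean r k) (cov r k) x)"

lemma cont_mv: "continuous_on UNIV (\<lambda>x. (A::real^'n^'n) *v (x - m))"
  by (rule continuous_on_compose2[OF matrix_vector_mult_linear_continuous_on[of UNIV A]]) (auto intro: continuous_intros)

lemma gdens_cont: "continuous_on UNIV (gdens r)"
  unfolding gdens_def gauss_pdf_def by (intro continuous_intros cont_mv) auto

lemma gdens_nonneg: assumes "valid_gmm r" shows "gdens r x \<ge> 0"
  unfolding gdens_def gauss_pdf_def using assms unfolding valid_gmm_def
  by (intro sum_nonneg mult_nonneg_nonneg) auto

lemma measure_dens:
  assumes v0: "valid_gmm r0" and v1: "valid_gmm r1" and m: "gmm_measure r0 = gmm_measure r1"
  shows "gdens r0 x = gdens r1 x"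
proof -
  have meas: "(\<lambda>x. ennreal (gdens r x)) \<in> borel_measurable lborel" for r :: "('n::finite) gmm"
    using gdens_cont[of r] by (intro measurable_compose[OF _ measurable_ennreal]) (simp add: borel_measurable_continuous_onI)
  have "density lborel (\<lambda>x. ennreal (gdens r0 x)) = density lborel (\<lambda>x. ennreal (gdens r1 x))"
    using m unfolding gmm_measure_def gdens_def .
  hence "AE x in lborel. ennreal (gdens r0 x) = ennreal (gdens r1 x)"
    using sigma_finite_measure.density_unique_iff[OF sigma_finite_lborel meas meas] by blast
  hence "AE x in lborel. gdens r0 x = gdens r1 x"
    by eventually_elim (use gdens_nonneg[OF v0] gdens_nonneg[OF v1] in simp)
  thus ?thesis using ae_cont_eq gdens_cont by blast
qed

lemma dist_triangle:
  assumes v0: "valid_gmm r0" and v1: "valid_gmm r1" and v2: "valid_gmm r2"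
  shows "gmm_dist r0 r2 \<le> gmm_dist r0 r1 + gmm_dist r1 r2"
proof -
  define I01 where "I01 = Inf (gmm_cost r0 r1 ` couplings r0 r1)"
  define I12 where "I12 = Inf (gmm_cost r1 r2 ` couplings r1 r2)"
  define I02 where "I02 = Inf (gmm_cost r0 r2 ` couplings r0 r2)"
  have main: "sqrt I02 \<le> sqrt (gmm_cost r0 r1 \<pi>1) + sqrt (gmm_cost r1 r2 \<pi>2)"
    if h: "\<pi>1 \<in> couplings r0 r1" "\<pi>2 \<in> couplings r1 r2" for \<pi>1 \<pi>2
  proof -
    obtain \<pi>3 where "\<pi>3 \<in> couplings r0 r2"
      "sqrt (gmm_cost r0 r2 \<pi>3) \<le> sqrt (gmm_cost r0 r1 \<pi>1) + sqrt (gmm_cost r1 r2 \<pi>2)"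
      using glue[OF v0 v1 v2 h] by blast
    moreover have "I02 \<le> gmm_cost r0 r2 \<pi>3" unfolding I02_def using cost_set(4)[OF v0 v2] calculation(1) .
    ultimately show ?thesis using real_sqrt_le_mono order_trans by blast
  qed
  have approx: "\<exists>\<pi> \<in> couplings ra rb. sqrt (gmm_cost ra rb \<pi>) \<le> sqrt (Inf (gmm_cost ra rb ` couplings ra rb)) + e"
    if h: "valid_gmm ra" "valid_gmm rb" "e > 0" for ra rb and e :: real
  proof -
    let ?I = "Inf (gmm_cost ra rb ` couplings ra rb)"
    have "?I < ?I + e^2" using h(3) by simp
    then obtain c where c: "c \<in> gmm_cost ra rb ` couplings ra rb" "c < ?I + e^2"
      using cInf_lessD[OF cost_set(1)[OF h(1,2)]] by blast
    then obtain \<pi> where \<pi>: "\<pi> \<in> couplings ra rb" "c = gmm_cost ra rb \<pi>" by auto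
    have "sqrt c \<le> sqrt (?I + e^2)" using c(2) by simp
    also have "\<dots> \<le> sqrt ?I + sqrt (e^2)" using cost_set(3)[OF h(1,2)] by (intro sqrt_add_le_add_sqrt) auto
    also have "sqrt (e^2) = e" using h(3) by simp
    finally show ?thesis using \<pi> by blast
  qed
  have "sqrt I02 \<le> sqrt I01 + sqrt I12 + e" if he: "e > 0" for e :: real
  proof -
    obtain \<pi>1 where \<pi>1: "\<pi>1 \<in> couplings r0 r1" "sqrt (gmm_cost r0 r1 \<pi>1) \<le> sqrt I01 + e/2"
      using approx[OF v0 v1, of "e/2"] he unfolding I01_def by auto
    obtain \<pi>2 where \<pi>2: "\<pi>2 \<in> couplings r1 r2" "sqrt (gmm_cost r1 r2 \<pi>2) \<le> sqrt I12 + e/2"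
      using approx[OF v1 v2, of "e/2"] he unfolding I12_def by auto
    show ?thesis using main[OF \<pi>1(1) \<pi>2(1)] \<pi>1(2) \<pi>2(2) by linarith
  qed
  hence "sqrt I02 \<le> sqrt I01 + sqrt I12" by (rule field_le_epsilon)
  thus ?thesis unfolding gmm_dist_def I01_def I12_def I02_def .
qed

definition gth :: "('n::finite) gmm \<Rightarrow> nat \<Rightarrow> (real^'n) \<times> (real^'n^'n)" where
  "gth r i = (mean r i, cov r i)"

definition gW :: "('n::finite) gmm \<Rightarrow> (real^'n) \<times> (real^'n^'n) \<Rightarrow> real" where
  "gW r t = (\<Sum>i<length r. if gth r i = t then wt r i else 0)"

lemma gdens_regroup:
  assumes "finite \<Theta>" "gth r ` {..<length r} \<subseteq> \<Theta>"
  shows "gdens r x = (\<Sum>t\<in>\<Theta>. gW r t * gauss_pdf (fst t) (snd t) x)"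
proof -
  have "(\<Sum>t\<in>\<Theta>. gW r t * gauss_pdf (fst t) (snd t) x)
      = (\<Sum>t\<in>\<Theta>. \<Sum>i<length r. if gth r i = t then wt r i * gauss_pdf (fst t) (snd t) x else 0)"
    unfolding gW_def by (auto simp: sum_distrib_right intro!: sum.cong)
  also have "\<dots> = (\<Sum>i<length r. \<Sum>t\<in>\<Theta>. if gth r i = t then wt r i * gauss_pdf (fst t) (snd t) x else 0)"
    by (rule sum.swap)
  also have "\<dots> = (\<Sum>i<length r. wt r i * gauss_pdf (mean r i) (cov r i) x)"
    using assms by (intro sum.cong refl) (auto simp: sum.delta gth_def)
  finally show ?thesis unfolding gdens_def by simp
qed

lemma gW_nonneg: assumes "valid_gmm r" shows "gW r t \<ge> 0"
  unfolding gW_def using valid_gmmD(1)[OF assms] by (auto intro!: sum_nonneg)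

lemma gW_ge: "valid_gmm r \<Longrightarrow> i < length r \<Longrightarrow> wt r i \<le> gW r (gth r i)"
proof -
  assume v: "valid_gmm r" and i: "i < length r"
  have "(if gth r i = gth r i then wt r i else 0) \<le> gW r (gth r i)" unfolding gW_def
    using valid_gmmD(1)[OF v] i by (intro member_le_sum) auto
  thus ?thesis by simp
qed

lemma gW_out: assumes "t \<notin> gth r ` {..<length r}" shows "gW r t = 0"
proof -
  have "\<forall>i\<in>{..<length r}. gth r i \<noteq> t" using assms by auto
  thus ?thesis unfolding gW_def by simp
qed

lemma bad_mass_bound:
  assumes "\<pi> \<in> couplings r0 r1"
  shows "\<bar>gW r0 t - gW r1 t\<bar> \<le> (\<Sum>i<length r0. \<Sum>j<length r1. if gth r0 i \<noteq> gth r1 j then \<pi> i j else 0)"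
proof -
  define n0 where "n0 = length r0"
  define n1 where "n1 = length r1"
  have P: "\<And>i j. i < n0 \<Longrightarrow> j < n1 \<Longrightarrow> \<pi> i j \<ge> 0" "\<And>i. i < n0 \<Longrightarrow> (\<Sum>j<n1. \<pi> i j) = wt r0 i"
     "\<And>j. j < n1 \<Longrightarrow> (\<Sum>i<n0. \<pi> i j) = wt r1 j"
    using assms unfolding couplings_def n0_def n1_def by auto
  have a: "gW r0 t = (\<Sum>i<n0. \<Sum>j<n1. (if gth r0 i = t then 1 else 0) * \<pi> i j)"
    unfolding gW_def n0_def[symmetric] using P(2)
    by (intro sum.cong refl) (simp add: sum_distrib_left[symmetric])
  have "gW r1 t = (\<Sum>j<n1. \<Sum>i<n0. (if gth r1 j = t then 1 else 0) * \<pi> i j)"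
    unfolding gW_def n1_def[symmetric] using P(3)
    by (intro sum.cong refl) (simp add: sum_distrib_left[symmetric])
  also have "\<dots> = (\<Sum>i<n0. \<Sum>j<n1. (if gth r1 j = t then 1 else 0) * \<pi> i j)" by (rule sum.swap)
  finally have b: "gW r1 t = \<dots>" .
  define F where "F i j = ((if gth r0 i = t then 1 else 0) - (if gth r1 j = t then 1 else 0)) * \<pi> i j" for i j
  have "gW r0 t - gW r1 t = (\<Sum>i<n0. \<Sum>j<n1. F i j)"
    unfolding a b F_def by (simp add: sum_subtractf left_diff_distrib)
  hence "\<bar>gW r0 t - gW r1 t\<bar> = \<bar>\<Sum>i<n0. \<Sum>j<n1. F i j\<bar>" by simp
  also have "\<dots> \<le> (\<Sum>i<n0. \<bar>\<Sum>j<n1. F i j\<bar>)" by (rule sum_abs)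
  also have "\<dots> \<le> (\<Sum>i<n0. \<Sum>j<n1. \<bar>F i j\<bar>)" by (intro sum_mono sum_abs)
  also have "\<dots> = (\<Sum>i<n0. \<Sum>j<n1. \<bar>((if gth r0 i = t then 1 else 0) - (if gth r1 j = t then 1 else 0)) * \<pi> i j\<bar>)"
    unfolding F_def ..
  also have "\<dots> \<le> (\<Sum>i<n0. \<Sum>j<n1. if gth r0 i \<noteq> gth r1 j then \<pi> i j else 0)"
    using P(1) by (intro sum_mono) (auto simp: abs_mult)
  finally show ?thesis unfolding n0_def n1_def .
qed

lemma dist_zero_imp:
  assumes v0: "valid_gmm r0" and v1: "valid_gmm r1" and z: "gmm_dist r0 r1 = 0"
  shows "gW r0 t = gW r1 t"
proof (rule ccontr)
  assume ne: "gW r0 t \<noteq> gW r1 t"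
  define n0 where "n0 = length r0"
  define n1 where "n1 = length r1"
  define c where "c i j = W2sq (mean r0 i) (cov r0 i) (mean r1 j) (cov r1 j)" for i j
  define Bad where "Bad = {(i, j). i < n0 \<and> j < n1 \<and> gth r0 i \<noteq> gth r1 j}"
  have fB: "finite Bad" unfolding Bad_def by (rule finite_subset[of _ "{..<n0} \<times> {..<n1}"]) auto
  define cmin where "cmin = Min (insert 1 ((\<lambda>(i,j). c i j) ` Bad))"
  have cpos: "c i j > 0" if "(i, j) \<in> Bad" for i j
  proof -
    have spd: "spd (cov r0 i)" "spd (cov r1 j)" using that valid_gmmD(2)[OF v0] valid_gmmD(2)[OF v1]
      unfolding Bad_def n0_def n1_def by auto
    have "c i j \<noteq> 0" using that W2sq_zero[OF spd] unfolding Bad_def c_def gth_def by auto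
    moreover have "c i j \<ge> 0" using W2sq_nonneg[OF spd] unfolding c_def .
    ultimately show ?thesis by simp
  qed
  have cmin_pos: "cmin > 0" unfolding cmin_def using fB cpos by (subst Min_gr_iff) auto
  have cmin_le: "cmin \<le> c i j" if "(i, j) \<in> Bad" for i j
    unfolding cmin_def using fB that by (intro Min_le) auto
  define \<delta> where "\<delta> = \<bar>gW r0 t - gW r1 t\<bar>"
  have dpos: "\<delta> > 0" using ne unfolding \<delta>_def by simp
  have "cmin * \<delta> \<le> gmm_cost r0 r1 \<pi>" if p: "\<pi> \<in> couplings r0 r1" for \<pi>
  proof -
    have P: "\<And>i j. i < n0 \<Longrightarrow> j < n1 \<Longrightarrow> \<pi> i j \<ge> 0"
      using p unfolding couplings_def n0_def n1_def by auto
    have cnn: "c i j \<ge> 0" if "i < n0" "j < n1" for i j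
      using W2sq_nonneg valid_gmmD(2)[OF v0] valid_gmmD(2)[OF v1] that unfolding c_def n0_def n1_def by blast
    have "cmin * \<delta> \<le> cmin * (\<Sum>i<n0. \<Sum>j<n1. if gth r0 i \<noteq> gth r1 j then \<pi> i j else 0)"
      using bad_mass_bound[OF p, of t] cmin_pos unfolding \<delta>_def n0_def n1_def by simp
    also have "\<dots> = (\<Sum>i<n0. \<Sum>j<n1. if gth r0 i \<noteq> gth r1 j then cmin * \<pi> i j else 0)"
      by (simp add: sum_distrib_left if_distrib cong: if_cong)
    also have "\<dots> \<le> (\<Sum>i<n0. \<Sum>j<n1. c i j * \<pi> i j)"
    proof (intro sum_mono)
      fix i j assume "i \<in> {..<n0}" "j \<in> {..<n1}"
      hence ij: "i < n0" "j < n1" by auto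
      show "(if gth r0 i \<noteq> gth r1 j then cmin * \<pi> i j else 0) \<le> c i j * \<pi> i j"
      proof (cases "gth r0 i \<noteq> gth r1 j")
        case True
        hence "(i, j) \<in> Bad" unfolding Bad_def using ij by auto
        thus ?thesis using True cmin_le P[OF ij] by (simp add: mult_right_mono)
      qed (use cnn[OF ij] P[OF ij] in simp)
    qed
    also have "\<dots> = gmm_cost r0 r1 \<pi>" unfolding gmm_cost_def c_def n0_def n1_def ..
    finally show ?thesis .
  qed
  hence "cmin * \<delta> \<le> Inf (gmm_cost r0 r1 ` couplings r0 r1)"
    using cost_set(1)[OF v0 v1] by (intro cInf_greatest) auto
  moreover have "Inf (gmm_cost r0 r1 ` couplings r0 r1) = 0" using z unfolding gmm_dist_def by simp
  ultimately show False using mult_pos_pos[OF cmin_pos dpos] by linarith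
qed

lemma dist_zero_measure:
  assumes v0: "valid_gmm r0" and v1: "valid_gmm r1" and z: "gmm_dist r0 r1 = 0"
  shows "gmm_measure r0 = gmm_measure r1"
proof -
  define \<Theta> where "\<Theta> = gth r0 ` {..<length r0} \<union> gth r1 ` {..<length r1}"
  have "finite \<Theta>" unfolding \<Theta>_def by simp
  have "gdens r0 x = gdens r1 x" for x
    using gdens_regroup[OF \<open>finite \<Theta>\<close>, of r0 x] gdens_regroup[OF \<open>finite \<Theta>\<close>, of r1 x]
      dist_zero_imp[OF v0 v1 z] unfolding \<Theta>_def by auto
  hence "(\<lambda>x. ennreal (gdens r0 x)) = (\<lambda>x. ennreal (gdens r1 x))" by simp
  thus ?thesis unfolding gmm_measure_def gdens_def by simp
qed

lemma measure_dist_zero: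
  assumes v0: "valid_gmm r0" and v1: "valid_gmm r1" and m: "gmm_measure r0 = gmm_measure r1"
  shows "gmm_dist r0 r1 = 0"
proof -
  define n0 where "n0 = length r0"
  define n1 where "n1 = length r1"
  define \<Theta> where "\<Theta> = gth r0 ` {..<n0} \<union> gth r1 ` {..<n1}"
  have fT: "finite \<Theta>" unfolding \<Theta>_def by simp
  have sT: "spd (snd t)" if "t \<in> \<Theta>" for t
    using that valid_gmmD(2)[OF v0] valid_gmmD(2)[OF v1] unfolding \<Theta>_def gth_def n0_def n1_def by auto
  have "(\<Sum>t\<in>\<Theta>. (gW r0 t - gW r1 t) * gauss_pdf (fst t) (snd t) x) = 0" for x
  proof -
    have "(\<Sum>t\<in>\<Theta>. (gW r0 t - gW r1 t) * gauss_pdf (fst t) (snd t) x) = gdens r0 x - gdens r1 x"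
      using gdens_regroup[OF fT, of r0 x] gdens_regroup[OF fT, of r1 x] unfolding \<Theta>_def n0_def n1_def
      by (simp add: left_diff_distrib sum_subtractf)
    thus ?thesis using measure_dens[OF v0 v1 m] by simp
  qed
  hence eqT: "\<forall>t\<in>\<Theta>. gW r0 t - gW r1 t = 0"
    using gauss_indep[where a = "\<lambda>t. gW r0 t - gW r1 t", OF fT sT] by blast
  have eqW: "gW r0 t = gW r1 t" for t
  proof (cases "t \<in> \<Theta>")
    case True thus ?thesis using eqT by simp
  next
    case False thus ?thesis using gW_out[of t r0] gW_out[of t r1] unfolding \<Theta>_def n0_def n1_def by auto
  qed
  define \<pi> where "\<pi> i j = (if gth r0 i = gth r1 j \<and> gW r0 (gth r0 i) \<noteq> 0
      then wt r0 i * wt r1 j / gW r0 (gth r0 i) else 0)" for i j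
  have w0: "\<And>i. i < n0 \<Longrightarrow> wt r0 i \<ge> 0" and w1: "\<And>j. j < n1 \<Longrightarrow> wt r1 j \<ge> 0"
    using valid_gmmD(1)[OF v0] valid_gmmD(1)[OF v1] unfolding n0_def n1_def by auto
  have cpl: "\<pi> \<in> couplings r0 r1" unfolding couplings_def n0_def[symmetric] n1_def[symmetric]
  proof (intro CollectI conjI allI impI)
    fix i j assume "i < n0" "j < n1"
    thus "\<pi> i j \<ge> 0" unfolding \<pi>_def using w0 w1 gW_nonneg[OF v0] by auto
  next
    fix i assume i: "i < n0"
    show "(\<Sum>j<n1. \<pi> i j) = wt r0 i"
    proof (cases "gW r0 (gth r0 i) = 0")
      case True
      hence "wt r0 i = 0" using gW_ge[OF v0, of i] w0[OF i] i unfolding n0_def by simp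
      thus ?thesis unfolding \<pi>_def using True by simp
    next
      case False
      have "(\<Sum>j<n1. \<pi> i j) = (\<Sum>j<n1. (wt r0 i / gW r0 (gth r0 i)) * (if gth r1 j = gth r0 i then wt r1 j else 0))"
        unfolding \<pi>_def using False by (intro sum.cong refl) auto
      also have "\<dots> = wt r0 i * (\<Sum>j<n1. if gth r1 j = gth r0 i then wt r1 j else 0) / gW r0 (gth r0 i)"
        by (subst sum_distrib_left[symmetric]) simp
      also have "(\<Sum>j<n1. if gth r1 j = gth r0 i then wt r1 j else 0) = gW r0 (gth r0 i)"
        using eqW unfolding gW_def n1_def by simp
      finally show ?thesis using False by simp
    qed
  next
    fix j assume j: "j < n1"
    show "(\<Sum>i<n0. \<pi> i j) = wt r1 j"
    proof (cases "gW r0 (gth r1 j) = 0")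
      case True
      have "wt r1 j \<le> gW r1 (gth r1 j)" using gW_ge[OF v1, of j] j unfolding n1_def by simp
      hence "wt r1 j = 0" using eqW[of "gth r1 j"] True w1[OF j] by linarith
      moreover have "\<forall>i\<in>{..<n0}. \<pi> i j = 0" unfolding \<pi>_def using True by auto
      ultimately show ?thesis by simp
    next
      case False
      have "(\<Sum>i<n0. \<pi> i j) = (\<Sum>i<n0. (if gth r0 i = gth r1 j then wt r0 i else 0) * (wt r1 j / gW r0 (gth r1 j)))"
        unfolding \<pi>_def using False by (intro sum.cong refl) auto
      also have "\<dots> = (\<Sum>i<n0. if gth r0 i = gth r1 j then wt r0 i else 0) * wt r1 j / gW r0 (gth r1 j)"
        by (subst sum_distrib_right[symmetric]) simp
      also have "(\<Sum>i<n0. if gth r0 i = gth r1 j then wt r0 i else 0) = gW r0 (gth r1 j)"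
        unfolding gW_def n0_def by simp
      finally show ?thesis using False by simp
    qed
  qed
  have "gmm_cost r0 r1 \<pi> = 0" unfolding gmm_cost_def
  proof (intro sum.neutral ballI)
    fix i j assume "i \<in> {..<length r0}" "j \<in> {..<length r1}"
    hence spd: "spd (cov r0 i)" "spd (cov r1 j)" using valid_gmmD(2)[OF v0] valid_gmmD(2)[OF v1] by auto
    show "W2sq (mean r0 i) (cov r0 i) (mean r1 j) (cov r1 j) * \<pi> i j = 0"
    proof (cases "gth r0 i = gth r1 j")
      case True
      hence "W2sq (mean r0 i) (cov r0 i) (mean r1 j) (cov r1 j) = 0" using W2sq_zero[OF spd] unfolding gth_def by simp
      thus ?thesis by simp
    qed (simp add: \<pi>_def)
  qed
  hence "Inf (gmm_cost r0 r1 ` couplings r0 r1) \<le> 0" using cost_set(4)[OF v0 v1 cpl] by simp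
  hence "Inf (gmm_cost r0 r1 ` couplings r0 r1) = 0" using cost_set(3)[OF v0 v1] by simp
  thus ?thesis unfolding gmm_dist_def by simp
qed

theorem theorem1:
  fixes r0 r1 r2 :: "('n::finite) gmm"
  assumes "valid_gmm r0" and "valid_gmm r1" and "valid_gmm r2"
  shows "gmm_dist r0 r1 \<ge> 0
         \<and> (gmm_dist r0 r1 = 0 \<longleftrightarrow> gmm_measure r0 = gmm_measure r1)
         \<and> gmm_dist r0 r1 = gmm_dist r1 r0
         \<and> gmm_dist r0 r2 \<le> gmm_dist r0 r1 + gmm_dist r1 r2"
  using dist_nonneg[OF assms(1,2)] dist_zero_measure[OF assms(1,2)] measure_dist_zero[OF assms(1,2)]
    dist_sym[OF assms(1,2)] dist_triangle[OF assms] by blast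

end
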